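(* Let $k\ge 1$, $n = 2^k-1$, and let $s_1,\dots,s_d$ be independent uniformly random elements of $\mathit{GL}_k(\mathbb{F}_2)$. Let $\omega = w_{2m}\cdots w_1$ be a word of length $2m$ whose literals are chosen independently and uniformly from $\{s_1,s_1^{-1},\dots,s_d,s_d^{-1}\}$ (independently of the values of the $s_j$), and let $v_1\in\mathbb{F}_2^k\setminus\{0\}$ be fixed. Then $$\mathbf{P}(\omega v_1 = v_1 \mid \text{at least one letter appears in } \omega \text{ exactly three times}) \le \frac{5}{n}.$$ In particular, if $X_3$ is the event that no letter appears in $\omega$ exactly once or exactly twice and at least one letter appears exactly three times, then $\mathbf{P}(\omega v_1 = v_1 \mid X_3) \le \frac{5}{n}$.
   Context: A letter $s_j$ "appears" in $\omega$ at each position where the literal $s_j$ or $s_j^{-1}$ occurs; $\omega v_1$ denotes $w_{2m}\cdots w_1 v_1$. The probability is over both the word $\omega$ and the values of $s_1,\dots,s_d$. *)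

theory Defs
  imports "HOL-Analysis.Analysis" "HOL-Probability.Probability" "HOL-Library.Z2"
begin

text \<open>A literal is a pair (j, b): index j < d of the generator s_(j+1); b = True means s_j,
  b = False means the inverse of s_j.\<close>
type_synonym literal = "nat \<times> bool"

definition lit_mat :: "('a::field ^'k^'k) list \<Rightarrow> literal \<Rightarrow> 'a ^'k^'k" where
  "lit_mat s l = (if snd l then s ! fst l else matrix_inv (s ! fst l))"

text \<open>The word is stored as the list [w_1, ..., w_2m]; its action omega v = w_2m ... w_1 v
  applies w_1 first.\<close>
definition word_apply :: "('a::field ^'k^'k) list \<Rightarrow> literal list \<Rightarrow> 'a ^'k \<Rightarrow> 'a ^'k" where
  "word_apply s w v = foldl (\<lambda>x l. lit_mat s l *v x) v w"

text \<open>Number of positions at which letter j (i.e. s_j or its inverse) appears.\<close>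
definition letter_count :: "literal list \<Rightarrow> nat \<Rightarrow> nat" where
  "letter_count w j = count_list (map fst w) j"

definition words :: "nat \<Rightarrow> nat \<Rightarrow> literal list set" where
  "words d len = {w. length w = len \<and> (\<forall>l\<in>set w. fst l < d)}"

definition GL_tuples :: "nat \<Rightarrow> ('a::field ^'k^'k) list set" where
  "GL_tuples d = {s. length s = d \<and> (\<forall>M\<in>set s. invertible M)}"

text \<open>Sample space: word of length 2m and d-tuple of elements of GL_k(F_2), uniform and
  independent (uniform on the product).\<close>
definition sample_space :: "nat \<Rightarrow> nat \<Rightarrow> (literal list \<times> (bit ^'k^'k) list) pmf" where
  "sample_space d m = pmf_of_set (words d (2*m) \<times> GL_tuples d)"

end

theory Submission
  imports Defs
begin

(* ---- from P1.thy ---- *)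

instance bit :: finite
proof
  have "(UNIV::bit set) = {0,1}" by (auto intro: bit.exhaust)
  then show "finite (UNIV::bit set)" by (metis finite.emptyI finite.insertI)
qed

lemma card_bit: "CARD(bit) = 2"
proof -
  have "(UNIV::bit set) = {0,1}" by (auto intro: bit.exhaust)
  then show ?thesis by (metis card_2_iff zero_neq_one)
qed

lemma bit_add_self[simp]: "(a::bit) + a = 0" by (cases a) auto
lemma bit_neg[simp]: "- (a::bit) = a" by (cases a) auto

lemma bv_add_self[simp]: "(x::bit^'k) + x = 0"
  by (simp add: vec_eq_iff)
lemma bv_neg[simp]: "- (x::bit^'k) = x"
  by (simp add: vec_eq_iff)
lemma bv_minus: "(x::bit^'k) - y = x + y"
  by (metis bv_neg diff_conv_add_uminus)
lemma bv_add_eq0: "(x::bit^'k) + y = 0 \<longleftrightarrow> x = y"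
  by (metis add_diff_cancel_left' bv_add_self bv_minus)
lemma bit_add_eq: "(a::bit) + b = c \<longleftrightarrow> a = b + c"
  by (cases a; cases b; cases c) auto
lemma bv_add_eq: "(x::bit^'k) + y = z \<longleftrightarrow> x = y + z"
  unfolding vec_eq_iff by (simp only: vector_add_component bit_add_eq)

lemma card_bv: "CARD(bit^'k) = 2 ^ CARD('k)"
  by (simp add: card_bit)

lemma finite_any[simp]: "finite (A::('a::finite) set)" by simp

definition NZ :: "(bit^'k) set" where "NZ = {x. x \<noteq> 0}"
definition GL :: "(bit^'k^'k) set" where "GL = {M. invertible M}"

lemma card_NZ: "card (NZ::(bit^'k) set) = 2 ^ CARD('k) - 1"
proof -
  have "NZ = (UNIV::(bit^'k) set) - {0}" by (auto simp: NZ_def)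
  then have "card (NZ::(bit^'k) set) = card (UNIV::(bit^'k) set) - 1"
    by (metis card_Diff_singleton finite_any UNIV_I)
  then show ?thesis by (simp add: card_bv card_bit)
qed


lemma bit_cases: "(a::bit) = 0 \<or> a = 1" by (cases a) auto

lemma span1: "vec.span {c::bit^'k} = {0, c}"
proof -
  have "range (\<lambda>k::bit. k *s c) = {0, c}"
  proof
    show "range (\<lambda>k::bit. k *s c) \<subseteq> {0, c}" using bit_cases by auto
    have "0 = (0::bit) *s c" "c = (1::bit) *s c" by simp_all
    then show "{0, c} \<subseteq> range (\<lambda>k::bit. k *s c)"
      by (metis empty_subsetI insert_subset rangeI)
  qed
  then show ?thesis by (simp add: vec.span_singleton)
qed

lemma span2: "vec.span {b, c::bit^'k} = {0, c, b, b + c}"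
proof -
  have "vec.span {b, c} = {x. \<exists>k. x - k *s b \<in> vec.span {c}}"
    by (rule vec.span_insert)
  also have "\<dots> = {x. \<exists>k. x - k *s b \<in> {0, c}}" by (simp only: span1)
  also have "\<dots> = {0, c, b, b + c}"
  proof (rule set_eqI, rule iffI)
    fix x assume "x \<in> {x. \<exists>k. x - k *s b \<in> {0, c}}"
    then obtain k where k: "x - k *s b \<in> {0,c}" by blast
    show "x \<in> {0,c,b,b+c}"
    proof (cases "k = 0")
      case True then show ?thesis using k by auto
    next
      case False then have "k = 1" using bit_cases by blast
      then have "x + b = 0 \<or> x + b = c" using k by (simp add: bv_minus)
      then have "x = b \<or> x = b + c" by (simp only: bv_add_eq0 bv_add_eq add_0_right)
      then show ?thesis by blast
    qed
  next
    fix x assume "x \<in> {0,c,b,b+c}"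
    then consider "x = 0" | "x = c" | "x = b" | "x = b + c" by blast
    then show "x \<in> {x. \<exists>k. x - k *s b \<in> {0, c}}"
    proof cases
      case 1 then show ?thesis by (auto intro!: exI[of _ 0])
    next
      case 2 then show ?thesis by (auto intro!: exI[of _ 0])
    next
      case 3 then show ?thesis by (auto intro!: exI[of _ 1])
    next
      case 4 then show ?thesis by (auto intro!: exI[of _ 1] simp: bv_minus add.assoc)
    qed
  qed
  finally show ?thesis .
qed

definition ind3 :: "bit^'k \<Rightarrow> bit^'k \<Rightarrow> bit^'k \<Rightarrow> bool" where
  "ind3 a b c \<longleftrightarrow> a \<noteq> 0 \<and> b \<noteq> 0 \<and> c \<noteq> 0 \<and> a \<noteq> b \<and> a \<noteq> c \<and> b \<noteq> c \<and> a + b + c \<noteq> 0"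

lemma indep1: "c \<noteq> 0 \<Longrightarrow> vec.independent {c::bit^'k}"
  by simp

lemma indep2: "b \<noteq> 0 \<Longrightarrow> c \<noteq> 0 \<Longrightarrow> b \<noteq> c \<Longrightarrow> vec.independent {b, c::bit^'k}"
  by (simp add: vec.independent_insert span1)

lemma sum3_eq0: "(a::bit^'k) + b + c = 0 \<longleftrightarrow> a = b + c"
  by (metis bv_add_eq bv_add_eq0)

lemma indep3: "ind3 a b c \<Longrightarrow> vec.independent {a, b, c::bit^'k}"
proof -
  assume h: "ind3 a b c"
  then have "a \<notin> vec.span {b, c}" unfolding span2 ind3_def sum3_eq0 by auto
  moreover have "vec.independent {b, c}" using h indep2 unfolding ind3_def by blast
  moreover have "a \<notin> {b, c}" using h unfolding ind3_def by auto
  ultimately show ?thesis by (simp add: vec.independent_insert)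
qed

lemma exists_GL_map:
  fixes f :: "bit^'k \<Rightarrow> bit^'k"
  assumes "vec.independent B" "vec.independent (f ` B)" "inj_on f B"
  shows "\<exists>h::bit^'k^'k. invertible h \<and> (\<forall>x\<in>B. h *v x = f x)"
proof -
  obtain g where g: "Vector_Spaces.linear (*s) (*s) g" "inj g" "\<forall>x\<in>B. g x = f x"
    using vec.linear_independent_extend_inj[OF assms] by blast
  have s: "surj g" using vec.linear_inj_imp_surj g by blast
  have m: "\<And>x. matrix g *v x = g x" using matrix_works g(1) by blast
  have "(*v) (matrix g) = g" using m by auto
  then have "bij ((*v) (matrix g))" using g(2) s by (simp add: bij_def)
  then have "invertible (matrix g)" by (simp add: invertible_eq_bij)
  then show ?thesis using m g(3) by auto
qed

lemma trans1:
  assumes "a \<noteq> 0" "a' \<noteq> 0"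
  shows "\<exists>h::bit^'k^'k. invertible h \<and> h *v a = a'"
  using exists_GL_map[of "{a}" "\<lambda>_. a'"] assms by auto

lemma trans2:
  assumes "a \<noteq> 0" "b \<noteq> 0" "a \<noteq> b" "a' \<noteq> 0" "b' \<noteq> 0" "a' \<noteq> b'"
  shows "\<exists>h::bit^'k^'k. invertible h \<and> h *v a = a' \<and> h *v b = b'"
proof -
  let ?f = "\<lambda>x. if x = a then a' else b'"
  have "?f ` {a, b} = {a', b'}" using assms by auto
  moreover have "inj_on ?f {a, b}" using assms by (auto simp: inj_on_def)
  ultimately show ?thesis
    using exists_GL_map[of "{a, b}" ?f] indep2[of a b] indep2[of a' b'] assms by auto
qed

lemma trans3:
  assumes "ind3 a b c" "ind3 a' b' c'"
  shows "\<exists>h::bit^'k^'k. invertible h \<and> h *v a = a' \<and> h *v b = b' \<and> h *v c = c'"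
proof -
  have d: "a \<noteq> b" "a \<noteq> c" "b \<noteq> c" "a' \<noteq> b'" "a' \<noteq> c'" "b' \<noteq> c'"
    using assms unfolding ind3_def by blast+
  let ?f = "\<lambda>x. if x = a then a' else if x = b then b' else c'"
  have i: "?f ` {a, b, c} = {a', b', c'}" using d by auto
  have j: "inj_on ?f {a, b, c}" using d unfolding inj_on_def by simp
  obtain h :: "bit^'k^'k" where "invertible h" "\<forall>x\<in>{a,b,c}. h *v x = ?f x"
    using exists_GL_map[of "{a, b, c}" ?f] indep3[OF assms(1)] indep3[OF assms(2)] i j by metis
  then show ?thesis using d by auto
qed


(* ---- from P2.thy ---- *)

lemma inv_props:
  assumes "invertible (M::'a::field^'n^'n)"
  shows "M ** matrix_inv M = mat 1" "matrix_inv M ** M = mat 1"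
proof -
  have "\<exists>A'. M ** A' = mat 1 \<and> A' ** M = mat 1" using assms by (simp add: invertible_def)
  then have "M ** matrix_inv M = mat 1 \<and> matrix_inv M ** M = mat 1"
    unfolding matrix_inv_def by (rule someI_ex)
  then show "M ** matrix_inv M = mat 1" "matrix_inv M ** M = mat 1" by auto
qed

lemma mi_left[simp]: "invertible (M::'a::field^'n^'n) \<Longrightarrow> matrix_inv M *v (M *v x) = x"
  by (simp add: matrix_vector_mul_assoc inv_props)
lemma mi_right[simp]: "invertible (M::'a::field^'n^'n) \<Longrightarrow> M *v (matrix_inv M *v x) = x"
  by (simp add: matrix_vector_mul_assoc inv_props)
lemma invertible_mi: "invertible (M::'a::field^'n^'n) \<Longrightarrow> invertible (matrix_inv M)"
  using inv_props unfolding invertible_def by blast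
lemma mi_unique: "invertible (M::'a::field^'n^'n) \<Longrightarrow> M ** B = mat 1 \<Longrightarrow> matrix_inv M = B"
  by (metis inv_props(2) matrix_mul_assoc matrix_mul_lid matrix_mul_rid)
lemma mi_mi: "invertible (M::'a::field^'n^'n) \<Longrightarrow> matrix_inv (matrix_inv M) = M"
  by (simp add: inv_props(2) invertible_mi mi_unique)
lemma Mv_eq_iff: "invertible (M::'a::field^'n^'n) \<Longrightarrow> (M *v a = M *v b) \<longleftrightarrow> a = b"
  by (metis mi_left)
lemma Mv_zero_iff: "invertible (M::'a::field^'n^'n) \<Longrightarrow> (M *v a = 0) \<longleftrightarrow> a = 0"
  by (metis Mv_eq_iff matrix_vector_mult_0_right)
lemma mi_eq_iff: "invertible (M::'a::field^'n^'n) \<Longrightarrow> (matrix_inv M *v a = b) \<longleftrightarrow> (M *v b = a)"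
  by (metis mi_left mi_right)

definition st :: "bool \<Rightarrow> bit^'k^'k \<Rightarrow> bit^'k \<Rightarrow> bit^'k" where
  "st e M a = (if e then M *v a else matrix_inv M *v a)"

lemma st_T[simp]: "st True M a = M *v a" by (simp add: st_def)
lemma st_F: "invertible M \<Longrightarrow> (st False M a = b) \<longleftrightarrow> (M *v b = a)"
  by (simp add: st_def mi_eq_iff)
lemma st_nz: "invertible M \<Longrightarrow> a \<noteq> 0 \<Longrightarrow> st e M a \<noteq> 0"
  by (simp add: st_def Mv_zero_iff invertible_mi)
lemma st_inv: "invertible M \<Longrightarrow> st e (matrix_inv M) a = st (\<not> e) M a"
  by (simp add: st_def mi_mi)

lemma finite_GL[simp]: "finite (GL::(bit^'k^'k) set)" by simp

lemma card_fibers: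
  assumes "finite A" "finite B" "\<And>a. a \<in> A \<Longrightarrow> f a \<in> B"
  shows "card A = (\<Sum>b\<in>B. card {a\<in>A. f a = b})"
proof -
  have "A = (\<Union>b\<in>B. {a\<in>A. f a = b})" using assms(3) by auto
  then have "card A = card (\<Union>b\<in>B. {a\<in>A. f a = b})" by simp
  also have "\<dots> = (\<Sum>b\<in>B. card {a\<in>A. f a = b})"
    by (rule card_UN_disjoint) (use assms in auto)
  finally show ?thesis .
qed

lemma fiber_bound:
  fixes \<phi> :: "bit^'k^'k \<Rightarrow> 'b"
  assumes T: "finite T" and img: "\<And>M. invertible M \<Longrightarrow> \<phi> M \<in> T"
    and tr: "\<And>t t'. t \<in> T \<Longrightarrow> t' \<in> T \<Longrightarrow>
       \<exists>h. invertible h \<and> (\<forall>M. invertible M \<longrightarrow> \<phi> M = t \<longrightarrow> \<phi> (h ** M) = t')"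
  shows "card T * card {M\<in>GL. \<phi> M = q} \<le> card (GL::(bit^'k^'k) set)"
proof (cases "q \<in> T")
  case False
  have e: "{M\<in>GL. \<phi> M = q} = {}" using img False by (auto simp: GL_def)
  show ?thesis unfolding e by simp
next
  case True
  have le: "card {M\<in>GL. \<phi> M = q} \<le> card {M\<in>GL. \<phi> M = t}" if t: "t \<in> T" for t
  proof -
    obtain h where h: "invertible h" "\<forall>M. invertible M \<longrightarrow> \<phi> M = q \<longrightarrow> \<phi> (h ** M) = t"
      using tr[OF True t] by blast
    have "inj_on (\<lambda>M. h ** M) {M\<in>GL. \<phi> M = q}"
      by (rule inj_onI) (metis h(1) inv_props(2) matrix_mul_assoc matrix_mul_lid)
    moreover have "(\<lambda>M. h ** M) ` {M\<in>GL. \<phi> M = q} \<subseteq> {M\<in>GL. \<phi> M = t}"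
      using h by (auto simp: GL_def invertible_mult)
    ultimately show ?thesis by (meson card_inj_on_le finite_any)
  qed
  have "card T * card {M\<in>GL. \<phi> M = q} = (\<Sum>t\<in>T. card {M\<in>GL. \<phi> M = q})" by simp
  also have "\<dots> \<le> (\<Sum>t\<in>T. card {M\<in>GL. \<phi> M = t})" by (rule sum_mono) (rule le)
  also have "\<dots> = card (GL::(bit^'k^'k) set)"
    by (rule card_fibers[symmetric]) (use T img in \<open>auto simp: GL_def\<close>)
  finally show ?thesis .
qed


lemma K1:
  fixes p q :: "bit^'k"
  assumes "p \<noteq> 0"
  shows "card (NZ::(bit^'k) set) * card {M\<in>GL. M *v p = q} \<le> card (GL::(bit^'k^'k) set)"
proof (rule fiber_bound)
  show "finite (NZ::(bit^'k) set)" by simp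
  show "\<And>M::bit^'k^'k. invertible M \<Longrightarrow> M *v p \<in> (NZ::(bit^'k) set)"
    using assms Mv_zero_iff unfolding NZ_def by blast
  fix t t' :: "bit^'k" assume "t \<in> NZ" "t' \<in> NZ"
  then have "t \<noteq> 0" "t' \<noteq> 0" by (auto simp: NZ_def)
  then obtain h :: "bit^'k^'k" where "invertible h" "h *v t = t'" using trans1 by blast
  then show "\<exists>h. invertible h \<and> (\<forall>M. invertible M \<longrightarrow> M *v p = t \<longrightarrow> (h ** M) *v p = t')"
    by (auto simp: matrix_vector_mul_assoc[symmetric])
qed


(* ---- from P3.thy ---- *)

definition T2 :: "((bit^'k) \<times> (bit^'k)) set" where
  "T2 = Sigma NZ (\<lambda>a. NZ - {a})"

lemma card_T2: "card (T2::((bit^'k) \<times> (bit^'k)) set) = card (NZ::(bit^'k) set) * (card (NZ::(bit^'k) set) - 1)"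
proof -
  have "card (T2::((bit^'k) \<times> (bit^'k)) set) = (\<Sum>a\<in>(NZ::(bit^'k) set). card (NZ - {a}))"
    unfolding T2_def by (rule card_SigmaI) auto
  also have "\<dots> = (\<Sum>a\<in>(NZ::(bit^'k) set). card (NZ::(bit^'k) set) - 1)"
    by (rule sum.cong) (auto simp: card_Diff_singleton)
  finally show ?thesis by simp
qed

lemma K2:
  fixes p1 p2 :: "bit^'k"
  assumes "p1 \<noteq> 0" "p2 \<noteq> 0" "p1 \<noteq> p2"
  shows "card (NZ::(bit^'k) set) * (card (NZ::(bit^'k) set) - 1) * card {M\<in>GL. M *v p1 = q1 \<and> M *v p2 = q2}
     \<le> card (GL::(bit^'k^'k) set)"
proof -
  have "card (T2::((bit^'k) \<times> (bit^'k)) set) * card {M\<in>GL. (M *v p1, M *v p2) = (q1, q2)} \<le> card (GL::(bit^'k^'k) set)"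
  proof (rule fiber_bound)
    show "finite (T2::((bit^'k) \<times> (bit^'k)) set)" by simp
    show "\<And>M::bit^'k^'k. invertible M \<Longrightarrow> (M *v p1, M *v p2) \<in> T2"
      using assms by (auto simp: T2_def NZ_def Mv_zero_iff Mv_eq_iff)
    fix t t' :: "(bit^'k) \<times> (bit^'k)" assume "t \<in> T2" "t' \<in> T2"
    then obtain a b a' b' where ab: "t = (a, b)" "t' = (a', b')" "a \<noteq> 0" "b \<noteq> 0" "a \<noteq> b"
      "a' \<noteq> 0" "b' \<noteq> 0" "a' \<noteq> b'" by (auto simp: T2_def NZ_def)
    then obtain h :: "bit^'k^'k" where "invertible h" "h *v a = a'" "h *v b = b'"
      using trans2 by metis
    then show "\<exists>h. invertible h \<and> (\<forall>M. invertible M \<longrightarrow> (M *v p1, M *v p2) = t \<longrightarrow>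
         ((h ** M) *v p1, (h ** M) *v p2) = t')"
      using ab by (auto simp: matrix_vector_mul_assoc[symmetric])
  qed
  then show ?thesis by (simp add: card_T2)
qed

definition T3 :: "(((bit^'k) \<times> (bit^'k)) \<times> (bit^'k)) set" where
  "T3 = Sigma T2 (\<lambda>(a,b). UNIV - {0, a, b, a + b})"

lemma card4: "a \<noteq> 0 \<Longrightarrow> b \<noteq> 0 \<Longrightarrow> a \<noteq> b \<Longrightarrow> card {0, a, b, a + (b::bit^'k)} = 4"
proof -
  assume h: "a \<noteq> 0" "b \<noteq> 0" "a \<noteq> b"
  have "a + b \<noteq> 0" using h bv_add_eq0 by blast
  moreover have "a + b \<noteq> a" using h by (metis add_cancel_right_right)
  moreover have "a + b \<noteq> b" using h by (metis add_cancel_left_left)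
  ultimately show ?thesis using h by simp
qed

lemma card_T3: "card (T3::(((bit^'k) \<times> (bit^'k)) \<times> (bit^'k)) set) =
   card (NZ::(bit^'k) set) * (card (NZ::(bit^'k) set) - 1) * (card (NZ::(bit^'k) set) - 3)"
proof -
  have cu: "card (UNIV::(bit^'k) set) = card (NZ::(bit^'k) set) + 1"
    by (simp add: card_NZ card_bv card_bit)
  have "card (T3::(((bit^'k) \<times> (bit^'k)) \<times> (bit^'k)) set) = (\<Sum>t\<in>(T2::((bit^'k) \<times> (bit^'k)) set). card ((\<lambda>(a,b). UNIV - {0, a, b, a + b}) t))"
    unfolding T3_def by (rule card_SigmaI) auto
  also have "\<dots> = (\<Sum>t\<in>(T2::((bit^'k) \<times> (bit^'k)) set). card (NZ::(bit^'k) set) - 3)"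
  proof (rule sum.cong)
    fix t assume "t \<in> (T2::((bit^'k) \<times> (bit^'k)) set)"
    then obtain a b where t: "t = (a,b)" "a \<noteq> 0" "b \<noteq> 0" "a \<noteq> b" by (auto simp: T2_def NZ_def)
    have "card (UNIV - {0, a, b, a + b}) = card (UNIV::(bit^'k) set) - card {0, a, b, a + b}"
      by (rule card_Diff_subset) auto
    then show "card ((\<lambda>(a,b). UNIV - {0, a, b, a + b}) t) = card (NZ::(bit^'k) set) - 3"
      using t card4[of a b] cu by simp
  qed simp
  finally show ?thesis by (simp add: card_T2)
qed

lemma K3:
  fixes p1 p2 p3 :: "bit^'k"
  assumes "ind3 p1 p2 p3"
  shows "card (NZ::(bit^'k) set) * (card (NZ::(bit^'k) set) - 1) * (card (NZ::(bit^'k) set) - 3)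
      * card {M\<in>GL. M *v p1 = q1 \<and> M *v p2 = q2 \<and> M *v p3 = q3}
     \<le> card (GL::(bit^'k^'k) set)"
proof -
  have ind: "ind3 (M *v p1) (M *v p2) (M *v p3)" if "invertible M" for M :: "bit^'k^'k"
  proof -
    have l: "M *v (p1+p2+p3) = M *v p1 + M *v p2 + M *v p3" by (simp add: matrix_vector_right_distrib)
    show ?thesis unfolding ind3_def l[symmetric]
      using assms[unfolded ind3_def] Mv_eq_iff[OF that] Mv_zero_iff[OF that] by simp
  qed
  have "card (T3::(((bit^'k) \<times> (bit^'k)) \<times> (bit^'k)) set) *
     card {M\<in>GL. ((M *v p1, M *v p2), M *v p3) = ((q1, q2), q3)} \<le> card (GL::(bit^'k^'k) set)"
  proof (rule fiber_bound)
    show "finite (T3::(((bit^'k) \<times> (bit^'k)) \<times> (bit^'k)) set)" by simp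
    show "\<And>M::bit^'k^'k. invertible M \<Longrightarrow> ((M *v p1, M *v p2), M *v p3) \<in> T3"
    proof -
      fix M :: "bit^'k^'k" assume "invertible M"
      then have "ind3 (M *v p1) (M *v p2) (M *v p3)" by (rule ind)
      then show "((M *v p1, M *v p2), M *v p3) \<in> T3"
        unfolding T3_def T2_def NZ_def ind3_def bv_add_eq0 by auto
    qed
    fix t t' :: "((bit^'k) \<times> (bit^'k)) \<times> (bit^'k)" assume "t \<in> T3" "t' \<in> T3"
    obtain a b c where t: "t = ((a, b), c)" by (metis prod.exhaust)
    obtain a' b' c' where t': "t' = ((a', b'), c')" by (metis prod.exhaust)
    have i1: "ind3 a b c" using \<open>t \<in> T3\<close> t unfolding T3_def T2_def NZ_def ind3_def bv_add_eq0 by auto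
    have i2: "ind3 a' b' c'" using \<open>t' \<in> T3\<close> t' unfolding T3_def T2_def NZ_def ind3_def bv_add_eq0 by auto
    note ab = t t' i1 i2
    then obtain h :: "bit^'k^'k" where "invertible h" "h *v a = a'" "h *v b = b'" "h *v c = c'"
      using trans3 by metis
    then show "\<exists>h. invertible h \<and> (\<forall>M. invertible M \<longrightarrow> ((M *v p1, M *v p2), M *v p3) = t \<longrightarrow>
         (((h ** M) *v p1, (h ** M) *v p2), (h ** M) *v p3) = t')"
      using ab by (auto simp: matrix_vector_mul_assoc[symmetric])
  qed
  then show ?thesis by (simp add: card_T3)
qed


(* ---- from P4.thy ---- *)

lemma arith1:
  fixes r N :: real assumes r: "r \<ge> 7" and N: "N \<ge> 0"
  shows "N / (r * (r - 1)) + N / ((r - 1) * (r - 3)) \<le> N / r"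
proof -
  obtain a b where ab: "a = r - 1" "b = r - 3" by blast
  have nz: "r > 0" "a > 0" "b > 0" using r ab by auto
  have 1: "N / (r * a) = N * b / (r * a * b)" using nz by (simp add: field_simps)
  have 2: "N / (a * b) = N * r / (r * a * b)" using nz by (simp add: field_simps)
  have 3: "N / r = N * (a * b) / (r * a * b)" using nz by (simp add: field_simps)
  have "r * (r - 6) \<ge> 0" using r by simp
  then have "b + r \<le> a * b" unfolding ab by (simp add: algebra_simps)
  then have "N * (b + r) \<le> N * (a * b)" using N by (rule mult_left_mono)
  then have "N * b + N * r \<le> N * (a * b)" by (simp add: algebra_simps)
  then have "(N * b + N * r) / (r * a * b) \<le> N * (a * b) / (r * a * b)"
    using nz by (intro divide_right_mono) simp_all
  then have "N / (r * a) + N / (a * b) \<le> N / r" unfolding 1 2 3 by (simp add: add_divide_distrib)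
  then show ?thesis using ab by simp
qed

lemma arith2:
  fixes r N :: real assumes r: "r \<ge> 7" and N: "N \<ge> 0"
  shows "3 * N + (r * r - 3 * r) * (N / (r * (r - 1)) + N / ((r - 1) * (r - 3))) \<le> 5 * N"
proof -
  obtain a b where ab: "a = r - 1" "b = r - 3" by blast
  have nz: "r > 0" "a > 0" "b > 0" using r ab by auto
  have rr: "r * r - 3 * r = r * b" unfolding ab by (simp add: algebra_simps)
  have 1: "(r * b) * (N / (r * a)) = N * b / a" using nz by (simp add: field_simps)
  have 2: "(r * b) * (N / (a * b)) = N * r / a" using nz by (simp add: field_simps)
  have "b + r \<le> 2 * a" using ab by simp
  then have "N * (b + r) \<le> N * (2 * a)" using N by (rule mult_left_mono)
  then have "N * b + N * r \<le> 2 * N * a" by (simp add: algebra_simps)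
  then have "(N * b + N * r) / a \<le> 2 * N" using nz by (simp add: divide_le_eq)
  then have "N * b / a + N * r / a \<le> 2 * N" by (simp add: add_divide_distrib)
  then have "3 * N + (r * b) * (N / (r * a) + N / (a * b)) \<le> 5 * N"
    unfolding distrib_left 1 2 by simp
  then show ?thesis using ab rr by simp
qed

lemma real_le_div:
  fixes k f N :: nat and d :: real
  assumes "k * f \<le> N" "real k = d" "d > 0"
  shows "real f \<le> real N / d"
proof -
  have "real k * real f \<le> real N" using assms(1) by (metis of_nat_le_iff of_nat_mult)
  then show ?thesis using assms(2,3) by (simp add: field_simps)
qed

lemma scheme:
  fixes f :: "'a \<Rightarrow> 'a \<Rightarrow> 'a \<Rightarrow> nat" and X :: "'a set" and Sp :: "('a \<times> 'a) set" and N n :: nat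
  assumes X: "finite X" "card X = n" and n7: "n \<ge> 7"
    and A: "\<And>x u. x \<in> X \<Longrightarrow> u \<in> X \<Longrightarrow> n * (\<Sum>w\<in>X. f x u w) \<le> N"
    and Sp: "Sp \<subseteq> X \<times> X" "card Sp \<le> 3 * n"
    and C: "\<And>x u. x \<in> X \<Longrightarrow> u \<in> X \<Longrightarrow> (x,u) \<notin> Sp \<Longrightarrow>
       \<exists>c. n*(n-1) * f x u c \<le> N \<and> (\<forall>w\<in>X. w \<noteq> c \<longrightarrow> n*(n-1)*(n-3) * f x u w \<le> N)"
  shows "(\<Sum>x\<in>X. \<Sum>u\<in>X. \<Sum>w\<in>X. f x u w) \<le> 5 * N"
proof -
  define r where "r = real n"
  have r7: "r \<ge> 7" using n7 r_def by simp
  define B where "B = real N / (r * (r - 1)) + real N / ((r - 1) * (r - 3))"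
  define F where "F = (\<lambda>p. \<Sum>w\<in>X. f (fst p) (snd p) w)"
  have FA: "real (F p) \<le> real N / r" if "p \<in> X \<times> X" for p
  proof -
    have "n * F p \<le> N" using A that unfolding F_def by (cases p) auto
    then show ?thesis using r7 unfolding r_def by (intro real_le_div) auto
  qed
  have FB: "real (F p) \<le> B" if hp: "p \<in> X \<times> X - Sp" for p
  proof -
    obtain x u where p: "p = (x,u)" "x \<in> X" "u \<in> X" "(x,u) \<notin> Sp" using hp by auto
    obtain c where c1: "n*(n-1) * f x u c \<le> N"
      and c2: "\<forall>w\<in>X. w \<noteq> c \<longrightarrow> n*(n-1)*(n-3) * f x u w \<le> N"
      using C p by blast
    have Fle: "F p \<le> f x u c + (\<Sum>w\<in>X - {c}. f x u w)"
    proof (cases "c \<in> X")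
      case True then show ?thesis using p X unfolding F_def by (simp add: sum.remove)
    next
      case False then show ?thesis using p unfolding F_def by simp
    qed
    have rc: "real (f x u c) \<le> real N / (r * (r - 1))"
      using c1 n7 r7 unfolding r_def by (intro real_le_div) (auto simp: of_nat_diff)
    have rw: "real (f x u w) \<le> real N / (r * (r - 1) * (r - 3))" if "w \<in> X - {c}" for w
      using c2 that n7 r7 unfolding r_def by (intro real_le_div) (auto simp: of_nat_diff)
    have "real (\<Sum>w\<in>X - {c}. f x u w) \<le> (\<Sum>w\<in>X - {c}. real N / (r * (r - 1) * (r - 3)))"
      unfolding of_nat_sum by (rule sum_mono) (rule rw)
    also have "\<dots> = real (card (X - {c})) * (real N / (r * (r - 1) * (r - 3)))" by simp
    also have "\<dots> \<le> r * (real N / (r * (r - 1) * (r - 3)))"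
    proof (rule mult_right_mono)
      have "card (X - {c}) \<le> card X" using X by (meson Diff_subset card_mono)
      then show "real (card (X - {c})) \<le> r" unfolding r_def using X by simp
      show "0 \<le> real N / (r * (r - 1) * (r - 3))" using r7 by simp
    qed
    also have "\<dots> = real N / ((r - 1) * (r - 3))"
    proof -
      have "r \<noteq> 0" using r7 by simp
      then show ?thesis by (simp add: mult.assoc)
    qed
    finally have sw: "real (\<Sum>w\<in>X - {c}. f x u w) \<le> real N / ((r - 1) * (r - 3))" .
    then have "real (F p) \<le> real (f x u c) + real (\<Sum>w\<in>X - {c}. f x u w)"
      using Fle by (metis of_nat_add of_nat_le_iff)
    then show ?thesis unfolding B_def using rc sw by linarith
  qed
  have eq0: "(\<Sum>x\<in>X. \<Sum>u\<in>X. \<Sum>w\<in>X. f x u w) = (\<Sum>(x,u)\<in>X \<times> X. \<Sum>w\<in>X. f x u w)"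
    by (rule sum.cartesian_product)
  have eq: "(\<Sum>x\<in>X. \<Sum>u\<in>X. \<Sum>w\<in>X. f x u w) = (\<Sum>p\<in>X \<times> X. F p)"
    unfolding eq0 F_def by (simp add: case_prod_beta)
  have split: "(\<Sum>p\<in>X \<times> X. F p) = (\<Sum>p\<in>X \<times> X - Sp. F p) + (\<Sum>p\<in>Sp. F p)"
    using Sp(1) X by (simp add: sum.subset_diff)
  have s1: "real (\<Sum>p\<in>Sp. F p) \<le> real (card Sp) * (real N / r)"
  proof -
    have "real (\<Sum>p\<in>Sp. F p) \<le> (\<Sum>p\<in>Sp. real N / r)"
      unfolding of_nat_sum by (rule sum_mono) (use FA Sp(1) in blast)
    then show ?thesis by simp
  qed
  have cd: "card (X \<times> X - Sp) = n * n - card Sp"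
    using Sp(1) X by (simp add: card_Diff_subset card_cartesian_product finite_subset)
  have s2: "real (\<Sum>p\<in>X \<times> X - Sp. F p) \<le> real (card (X \<times> X - Sp)) * B"
  proof -
    have "real (\<Sum>p\<in>X \<times> X - Sp. F p) \<le> (\<Sum>p\<in>X \<times> X - Sp. B)"
      unfolding of_nat_sum by (rule sum_mono) (rule FB)
    then show ?thesis by simp
  qed
  have cSp: "card Sp \<le> n * n"
    using Sp(1) X by (metis card_cartesian_product card_mono finite_cartesian_product)
  have rcd: "real (card (X \<times> X - Sp)) = r * r - real (card Sp)"
    unfolding cd r_def using cSp by (simp add: of_nat_diff)
  have B0: "B \<le> real N / r" unfolding B_def using r7 by (intro arith1) auto
  have sSp: "real (card Sp) \<le> 3 * r" using Sp(2) unfolding r_def by simp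
  have "real (\<Sum>x\<in>X. \<Sum>u\<in>X. \<Sum>w\<in>X. f x u w)
      \<le> real (card Sp) * (real N / r) + (r * r - real (card Sp)) * B"
    unfolding eq split using s1 s2 rcd by simp
  also have "\<dots> = r * r * B + real (card Sp) * (real N / r - B)" by (simp add: algebra_simps)
  also have "\<dots> \<le> r * r * B + (3 * r) * (real N / r - B)"
    using sSp B0 by (simp add: mult_right_mono)
  also have "\<dots> = 3 * real N + (r * r - 3 * r) * B" using r7 by (simp add: field_simps)
  also have "\<dots> \<le> 5 * real N" unfolding B_def using r7 by (intro arith2) auto
  finally have "real (\<Sum>x\<in>X. \<Sum>u\<in>X. \<Sum>w\<in>X. f x u w) \<le> real (5 * N)" by simp
  then show ?thesis by (simp only: of_nat_le_iff)
qed


(* ---- from P5.thy ---- *)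

lemma sum_disj_le:
  assumes "finite X" "finite A" "\<And>w. w \<in> X \<Longrightarrow> S w \<subseteq> A"
    "\<And>w w'. w \<in> X \<Longrightarrow> w' \<in> X \<Longrightarrow> w \<noteq> w' \<Longrightarrow> S w \<inter> S w' = {}"
  shows "(\<Sum>w\<in>X. card (S w)) \<le> card A"
proof -
  have f: "\<And>w. w \<in> X \<Longrightarrow> finite (S w)" using assms(2,3) finite_subset by blast
  have "(\<Sum>w\<in>X. card (S w)) = card (\<Union>w\<in>X. S w)"
    by (rule card_UN_disjoint[symmetric]) (use assms f in auto)
  also have "\<dots> \<le> card A" using assms by (intro card_mono) auto
  finally show ?thesis .
qed

lemma graph_card1:
  assumes "finite X" "\<And>x u. x \<in> X \<Longrightarrow> u \<in> X \<Longrightarrow> P x u \<Longrightarrow> u = h x"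
  shows "card {p\<in>X \<times> X. P (fst p) (snd p)} \<le> card X"
proof -
  have "inj_on fst {p\<in>X \<times> X. P (fst p) (snd p)}"
    using assms(2) by (auto simp: inj_on_def)
  moreover have "fst ` {p\<in>X \<times> X. P (fst p) (snd p)} \<subseteq> X" by auto
  ultimately show ?thesis using assms(1) card_inj_on_le by blast
qed

lemma graph_card2:
  assumes "finite X" "\<And>x u. x \<in> X \<Longrightarrow> u \<in> X \<Longrightarrow> P x u \<Longrightarrow> x = h u"
  shows "card {p\<in>X \<times> X. P (fst p) (snd p)} \<le> card X"
proof -
  have "inj_on snd {p\<in>X \<times> X. P (fst p) (snd p)}"
    using assms(2) by (auto simp: inj_on_def)
  moreover have "snd ` {p\<in>X \<times> X. P (fst p) (snd p)} \<subseteq> X" by auto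
  ultimately show ?thesis using assms(1) card_inj_on_le by blast
qed

lemma card_Un3_le: "card (A \<union> B \<union> C) \<le> card A + card B + card C"
  by (meson add_le_mono card_Un_le le_trans order_refl)

lemma mult_card_mono:
  assumes "S \<subseteq> S'" "finite S'" "k * card S' \<le> (N::nat)"
  shows "k * card S \<le> N"
  by (meson assms card_mono le_trans mult_le_mono2)

lemma st_iff: "invertible M \<Longrightarrow> (st e M a = b) \<longleftrightarrow> (if e then M *v a = b else M *v b = a)"
  by (cases e) (simp_all add: st_F)

lemma tr_eq: "invertible (M::bit^'k^'k) \<Longrightarrow> M *v p1 = q1 \<Longrightarrow> M *v p2 = q2 \<Longrightarrow> (p1 = p2 \<longleftrightarrow> q1 = q2)"
  using Mv_eq_iff[of M p1 p2] by simp
lemma tr_sum: "invertible (M::bit^'k^'k) \<Longrightarrow> M *v p1 = q1 \<Longrightarrow> M *v p2 = q2 \<Longrightarrow> M *v p3 = q3 \<Longrightarrow>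
   (p1 + p2 + p3 = 0 \<longleftrightarrow> q1 + q2 + q3 = 0)"
  by (metis Mv_zero_iff matrix_vector_right_distrib)

lemma K3e:
  fixes p1 p2 p3 :: "bit^'k"
  assumes "\<And>M. M \<in> GL \<Longrightarrow> M *v p1 = q1 \<Longrightarrow> M *v p2 = q2 \<Longrightarrow> M *v p3 = q3 \<Longrightarrow> ind3 p1 p2 p3"
  shows "card (NZ::(bit^'k) set) * (card (NZ::(bit^'k) set) - 1) * (card (NZ::(bit^'k) set) - 3)
      * card {M\<in>GL. M *v p1 = q1 \<and> M *v p2 = q2 \<and> M *v p3 = q3}
     \<le> card (GL::(bit^'k^'k) set)"
proof (cases "{M\<in>GL. M *v p1 = q1 \<and> M *v p2 = q2 \<and> M *v p3 = q3} = {}")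
  case True then show ?thesis by (metis card.empty le0 mult_0_right)
next
  case False
  then obtain M where "M \<in> GL" "M *v p1 = q1" "M *v p2 = q2" "M *v p3 = q3" by blast
  then have "ind3 p1 p2 p3" using assms by blast
  then show ?thesis by (rule K3)
qed

lemma bit3: "(a::bit) + b + c = 0 \<longleftrightarrow> c = a + b" "(a::bit) + b + c = 0 \<longleftrightarrow> b = a + c"
  by (cases a; cases b; cases c; simp)+

lemma s3z: "(a::bit^'k) + b + c = 0 \<longleftrightarrow> c = a + b"
  unfolding vec_eq_iff by (simp only: vector_add_component zero_index bit3(1))
lemma s3z': "(a::bit^'k) + b + c = 0 \<longleftrightarrow> b = a + c"
  unfolding vec_eq_iff by (simp only: vector_add_component zero_index bit3(2))

locale core =
  fixes g1 g2 gz :: "bit^'k \<Rightarrow> bit^'k"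
  assumes inj: "inj g1" "inj g2" "inj gz"
    and z0: "g1 0 = 0" "g2 0 = 0" "gz 0 = 0"
begin

lemma nz: "x \<noteq> 0 \<Longrightarrow> g1 x \<noteq> 0" "x \<noteq> 0 \<Longrightarrow> g2 x \<noteq> 0" "x \<noteq> 0 \<Longrightarrow> gz x \<noteq> 0"
  using inj z0 by (metis injD)+

definition S where
  "S e1 e2 e3 x b1 b2 = {M\<in>GL. st e1 M x = b1 \<and> st e2 M (g1 b1) = b2 \<and> st e3 M (g2 b2) = gz x}"

lemma S_TTT: "S True True True x b1 b2 = {M\<in>GL. M *v x = b1 \<and> M *v g1 b1 = b2 \<and> M *v g2 b2 = gz x}"
  unfolding S_def by simp

lemma TTT:
  assumes n7: "card (NZ::(bit^'k) set) \<ge> 7"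
  shows "(\<Sum>x\<in>NZ. \<Sum>b1\<in>NZ. \<Sum>b2\<in>NZ. card (S True True True x b1 b2)) \<le> 5 * card (GL::(bit^'k^'k) set)"
proof (rule scheme[where Sp = "{p\<in>NZ \<times> NZ. g1 (snd p) = fst p} \<union> {p\<in>NZ \<times> NZ. snd p = gz (fst p)}
     \<union> {p\<in>NZ \<times> NZ. g1 (snd p) = g2 (gz (fst p))}"])
  show "finite (NZ::(bit^'k) set)" by simp
  show "card (NZ::(bit^'k) set) = card (NZ::(bit^'k) set)" ..
  show "7 \<le> card (NZ::(bit^'k) set)" by (rule n7)
  show "{p\<in>NZ \<times> NZ. g1 (snd p) = fst p} \<union> {p\<in>NZ \<times> NZ. snd p = gz (fst p)}
     \<union> {p\<in>NZ \<times> NZ. g1 (snd p) = g2 (gz (fst p))} \<subseteq> NZ \<times> NZ" by auto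
  show "card ({p\<in>NZ \<times> NZ. g1 (snd p) = fst p} \<union> {p\<in>NZ \<times> NZ. snd p = gz (fst p)}
     \<union> {p\<in>NZ \<times> NZ. g1 (snd p) = g2 (gz (fst p))}) \<le> 3 * card (NZ::(bit^'k) set)"
  proof -
    have i1: "\<And>x u. g1 u = x \<Longrightarrow> u = inv g1 x" using inj(1) by (metis inv_f_f)
    have i3: "\<And>x u. g1 u = g2 (gz x) \<Longrightarrow> u = inv g1 (g2 (gz x))" using inj(1) by (metis inv_f_f)
    have "card {p\<in>NZ \<times> NZ. g1 (snd p) = fst p} \<le> card (NZ::(bit^'k) set)"
      by (rule graph_card1[where h = "inv g1"]) (use i1 in auto)
    moreover have "card {p\<in>NZ \<times> NZ. snd p = gz (fst p)} \<le> card (NZ::(bit^'k) set)"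
      by (rule graph_card1[where h = "gz"]) auto
    moreover have "card {p\<in>NZ \<times> NZ. g1 (snd p) = g2 (gz (fst p))} \<le> card (NZ::(bit^'k) set)"
      by (rule graph_card1[where h = "\<lambda>x. inv g1 (g2 (gz x))"]) (use i3 in auto)
    moreover note card_Un3_le[of "{p\<in>NZ \<times> NZ. g1 (snd p) = fst p}" "{p\<in>NZ \<times> NZ. snd p = gz (fst p)}"
      "{p\<in>NZ \<times> NZ. g1 (snd p) = g2 (gz (fst p))}"]
    ultimately show ?thesis by linarith
  qed
  fix x b1 :: "bit^'k" assume x: "x \<in> NZ" and b1: "b1 \<in> NZ"
  show "card (NZ::(bit^'k) set) * (\<Sum>b2\<in>NZ. card (S True True True x b1 b2)) \<le> card (GL::(bit^'k^'k) set)"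
  proof -
    have "(\<Sum>b2\<in>NZ. card (S True True True x b1 b2)) \<le> card {M\<in>GL. M *v x = b1}"
      by (rule sum_disj_le) (auto simp: S_TTT)
    moreover have "card (NZ::(bit^'k) set) * card {M\<in>GL. M *v x = b1} \<le> card (GL::(bit^'k^'k) set)"
      using x by (intro K1) (simp add: NZ_def)
    ultimately show ?thesis by (meson le_trans mult_le_mono2)
  qed
  assume nsp: "(x, b1) \<notin> {p\<in>NZ \<times> NZ. g1 (snd p) = fst p} \<union> {p\<in>NZ \<times> NZ. snd p = gz (fst p)}
     \<union> {p\<in>NZ \<times> NZ. g1 (snd p) = g2 (gz (fst p))}"
  have x0: "x \<noteq> 0" and b0: "b1 \<noteq> 0" using x b1 by (auto simp: NZ_def)
  have s1: "g1 b1 \<noteq> x" and s2: "b1 \<noteq> gz x" and s3: "g1 b1 \<noteq> g2 (gz x)" using nsp x b1 by auto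
  let ?c = "b1 + gz x"
  show "\<exists>c. card (NZ::(bit^'k) set) * (card (NZ::(bit^'k) set) - 1) * card (S True True True x b1 c) \<le> card (GL::(bit^'k^'k) set) \<and>
     (\<forall>w\<in>NZ. w \<noteq> c \<longrightarrow> card (NZ::(bit^'k) set) * (card (NZ::(bit^'k) set) - 1) * (card (NZ::(bit^'k) set) - 3) * card (S True True True x b1 w) \<le> card (GL::(bit^'k^'k) set))"
  proof (intro exI conjI ballI impI)
    show "card (NZ::(bit^'k) set) * (card (NZ::(bit^'k) set) - 1) * card (S True True True x b1 ?c) \<le> card (GL::(bit^'k^'k) set)"
    proof (rule mult_card_mono)
      show "S True True True x b1 ?c \<subseteq> {M\<in>GL. M *v x = b1 \<and> M *v g1 b1 = ?c}" by (auto simp: S_TTT)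
      show "finite {M\<in>GL. M *v x = b1 \<and> M *v g1 b1 = ?c}" by simp
      show "card (NZ::(bit^'k) set) * (card (NZ::(bit^'k) set) - 1) * card {M\<in>GL. M *v x = b1 \<and> M *v g1 b1 = ?c} \<le> card (GL::(bit^'k^'k) set)"
        using x0 b0 s1 nz by (intro K2) auto
    qed
    fix w :: "bit^'k" assume w: "w \<in> NZ" "w \<noteq> ?c"
    show "card (NZ::(bit^'k) set) * (card (NZ::(bit^'k) set) - 1) * (card (NZ::(bit^'k) set) - 3) * card (S True True True x b1 w) \<le> card (GL::(bit^'k^'k) set)"
      unfolding S_TTT
    proof (rule K3e)
      fix M :: "bit^'k^'k" assume M: "M \<in> GL" "M *v x = b1" "M *v g1 b1 = w" "M *v g2 w = gz x"
      have inv: "invertible M" using M by (simp add: GL_def)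
      have w0: "w \<noteq> 0" using w by (simp add: NZ_def)
      show "ind3 x (g1 b1) (g2 w)"
        unfolding ind3_def
      proof (intro conjI)
        show "x \<noteq> 0" "g1 b1 \<noteq> 0" "g2 w \<noteq> 0" using x0 b0 w0 nz by auto
        show "x \<noteq> g1 b1" using s1 by auto
        show "x \<noteq> g2 w" using tr_eq[OF inv M(2) M(4)] s2 by auto
        show "g1 b1 \<noteq> g2 w" using tr_eq[OF inv M(3) M(4)] s3 by auto
        show "x + g1 b1 + g2 w \<noteq> 0" unfolding tr_sum[OF inv M(2) M(3) M(4)]
          using w(2) by (metis add.commute bv_add_eq bv_add_eq0)
      qed
    qed
  qed
qed


lemma GL_inv: "M \<in> GL \<Longrightarrow> invertible M" by (simp add: GL_def)

lemma S_TTF: "S True True False x b1 b2 = {M\<in>GL. M *v x = b1 \<and> M *v g1 b1 = b2 \<and> M *v gz x = g2 b2}"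
  unfolding S_def by (rule Collect_cong) (use GL_inv st_F in \<open>simp only: st_T; blast\<close>)
lemma S_TFT: "S True False True x b1 b2 = {M\<in>GL. M *v x = b1 \<and> M *v b2 = g1 b1 \<and> M *v g2 b2 = gz x}"
  unfolding S_def by (rule Collect_cong) (use GL_inv st_F in \<open>simp only: st_T; blast\<close>)
lemma S_TFF: "S True False False x b1 b2 = {M\<in>GL. M *v x = b1 \<and> M *v b2 = g1 b1 \<and> M *v gz x = g2 b2}"
  unfolding S_def by (rule Collect_cong) (use GL_inv st_F in \<open>simp only: st_T; blast\<close>)


end

(* ---- from P5b.thy ---- *)
context core begin

lemma TTF:
  assumes n7: "card (NZ::(bit^'k) set) \<ge> 7"
  shows "(\<Sum>x\<in>NZ. \<Sum>b1\<in>NZ. \<Sum>b2\<in>NZ. card (S True True False x b1 b2)) \<le> 5 * card (GL::(bit^'k^'k) set)"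
proof (rule scheme[where Sp = "{p\<in>NZ \<times> NZ. g1 (snd p) = fst p} \<union> {p\<in>NZ \<times> NZ. g1 (snd p) = gz (fst p)}
     \<union> {p\<in>NZ \<times> NZ. g1 (snd p) = fst p + gz (fst p)}"])
  show "finite (NZ::(bit^'k) set)" by simp
  show "card (NZ::(bit^'k) set) = card (NZ::(bit^'k) set)" ..
  show "7 \<le> card (NZ::(bit^'k) set)" by (rule n7)
  show "{p\<in>NZ \<times> NZ. g1 (snd p) = fst p} \<union> {p\<in>NZ \<times> NZ. g1 (snd p) = gz (fst p)}
     \<union> {p\<in>NZ \<times> NZ. g1 (snd p) = fst p + gz (fst p)} \<subseteq> NZ \<times> NZ" by auto
  show "card ({p\<in>NZ \<times> NZ. g1 (snd p) = fst p} \<union> {p\<in>NZ \<times> NZ. g1 (snd p) = gz (fst p)}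
     \<union> {p\<in>NZ \<times> NZ. g1 (snd p) = fst p + gz (fst p)}) \<le> 3 * card (NZ::(bit^'k) set)"
  proof -
    have i1: "\<And>x u. g1 u = x \<Longrightarrow> u = inv g1 x" using inj(1) by (metis inv_f_f)
    have "card {p\<in>NZ \<times> NZ. g1 (snd p) = fst p} \<le> card (NZ::(bit^'k) set)"
      by (rule graph_card1[where h = "inv g1"]) (use i1 in auto)
    moreover have "card {p\<in>NZ \<times> NZ. g1 (snd p) = gz (fst p)} \<le> card (NZ::(bit^'k) set)"
      by (rule graph_card1[where h = "\<lambda>x. inv g1 (gz x)"]) (auto intro: i1)
    moreover have "card {p\<in>NZ \<times> NZ. g1 (snd p) = fst p + gz (fst p)} \<le> card (NZ::(bit^'k) set)"
      by (rule graph_card1[where h = "\<lambda>x. inv g1 (x + gz x)"]) (auto intro: i1)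
    moreover note card_Un3_le[of "{p\<in>NZ \<times> NZ. g1 (snd p) = fst p}" "{p\<in>NZ \<times> NZ. g1 (snd p) = gz (fst p)}"
      "{p\<in>NZ \<times> NZ. g1 (snd p) = fst p + gz (fst p)}"]
    ultimately show ?thesis by linarith
  qed
  fix x b1 :: "bit^'k" assume x: "x \<in> NZ" and b1: "b1 \<in> NZ"
  show "card (NZ::(bit^'k) set) * (\<Sum>b2\<in>NZ. card (S True True False x b1 b2)) \<le> card (GL::(bit^'k^'k) set)"
  proof -
    have "(\<Sum>b2\<in>NZ. card (S True True False x b1 b2)) \<le> card {M\<in>GL. M *v x = b1}"
      by (rule sum_disj_le) (auto simp: S_TTF)
    moreover have "card (NZ::(bit^'k) set) * card {M\<in>GL. M *v x = b1} \<le> card (GL::(bit^'k^'k) set)"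
      using x by (intro K1) (simp add: NZ_def)
    ultimately show ?thesis by (meson le_trans mult_le_mono2)
  qed
  assume nsp: "(x, b1) \<notin> {p\<in>NZ \<times> NZ. g1 (snd p) = fst p} \<union> {p\<in>NZ \<times> NZ. g1 (snd p) = gz (fst p)}
     \<union> {p\<in>NZ \<times> NZ. g1 (snd p) = fst p + gz (fst p)}"
  have x0: "x \<noteq> 0" and b0: "b1 \<noteq> 0" using x b1 by (auto simp: NZ_def)
  have s1: "g1 b1 \<noteq> x" and s2: "g1 b1 \<noteq> gz x" and s3: "g1 b1 \<noteq> x + gz x" using nsp x b1 by auto
  let ?c = "inv g2 b1"
  show "\<exists>c. card (NZ::(bit^'k) set) * (card (NZ::(bit^'k) set) - 1) * card (S True True False x b1 c) \<le> card (GL::(bit^'k^'k) set) \<and>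
     (\<forall>w\<in>NZ. w \<noteq> c \<longrightarrow> card (NZ::(bit^'k) set) * (card (NZ::(bit^'k) set) - 1) * (card (NZ::(bit^'k) set) - 3) * card (S True True False x b1 w) \<le> card (GL::(bit^'k^'k) set))"
  proof (intro exI conjI ballI impI)
    show "card (NZ::(bit^'k) set) * (card (NZ::(bit^'k) set) - 1) * card (S True True False x b1 ?c) \<le> card (GL::(bit^'k^'k) set)"
    proof (rule mult_card_mono)
      show "S True True False x b1 ?c \<subseteq> {M\<in>GL. M *v x = b1 \<and> M *v g1 b1 = ?c}" by (auto simp: S_TTF)
      show "finite {M\<in>GL. M *v x = b1 \<and> M *v g1 b1 = ?c}" by simp
      show "card (NZ::(bit^'k) set) * (card (NZ::(bit^'k) set) - 1) * card {M\<in>GL. M *v x = b1 \<and> M *v g1 b1 = ?c} \<le> card (GL::(bit^'k^'k) set)"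
        using x0 b0 s1 nz by (intro K2) auto
    qed
    fix w :: "bit^'k" assume w: "w \<in> NZ" "w \<noteq> ?c"
    show "card (NZ::(bit^'k) set) * (card (NZ::(bit^'k) set) - 1) * (card (NZ::(bit^'k) set) - 3) * card (S True True False x b1 w) \<le> card (GL::(bit^'k^'k) set)"
    proof -
      have eq: "S True True False x b1 w = {M\<in>GL. M *v x = b1 \<and> M *v g1 b1 = w \<and> M *v gz x = g2 w}"
        by (rule S_TTF)
      show ?thesis unfolding eq
      proof (rule K3e)
        fix M :: "bit^'k^'k" assume M: "M \<in> GL" "M *v x = b1" "M *v g1 b1 = w" "M *v gz x = g2 w"
        have inv: "invertible M" using M by (simp add: GL_def)
        show "ind3 x (g1 b1) (gz x)"
          unfolding ind3_def
        proof (intro conjI)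
          show "x \<noteq> 0" "g1 b1 \<noteq> 0" "gz x \<noteq> 0" using x0 b0 nz by auto
          show "x \<noteq> g1 b1" using s1 by auto
          show "x \<noteq> gz x"
          proof
            assume "x = gz x"
            then have "b1 = g2 w" using tr_eq[OF inv M(2) M(4)] by simp
            moreover have "inv g2 (g2 w) = w" by (rule inv_f_f[OF inj(2)])
            ultimately have "w = ?c" by simp
            then show False using w(2) by simp
          qed
          show "g1 b1 \<noteq> gz x" using s2 by auto
          show "x + g1 b1 + gz x \<noteq> 0" unfolding s3z' using s3 .
        qed
      qed
    qed
  qed
qed

end

(* ---- from P5c.thy ---- *)
context core begin

lemma TFT:
  assumes n7: "card (NZ::(bit^'k) set) \<ge> 7"
  shows "(\<Sum>x\<in>NZ. \<Sum>b1\<in>NZ. \<Sum>b2\<in>NZ. card (S True False True x b1 b2)) \<le> 5 * card (GL::(bit^'k^'k) set)"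
proof (rule scheme[where Sp = "{p\<in>NZ \<times> NZ. snd p = gz (fst p)} \<union> {p\<in>NZ \<times> NZ. g1 (snd p) = gz (fst p)}
     \<union> {p\<in>NZ \<times> NZ. gz (fst p) = snd p + g1 (snd p)}"])
  show "finite (NZ::(bit^'k) set)" by simp
  show "card (NZ::(bit^'k) set) = card (NZ::(bit^'k) set)" ..
  show "7 \<le> card (NZ::(bit^'k) set)" by (rule n7)
  show "{p\<in>NZ \<times> NZ. snd p = gz (fst p)} \<union> {p\<in>NZ \<times> NZ. g1 (snd p) = gz (fst p)}
     \<union> {p\<in>NZ \<times> NZ. gz (fst p) = snd p + g1 (snd p)} \<subseteq> NZ \<times> NZ" by auto
  show "card ({p\<in>NZ \<times> NZ. snd p = gz (fst p)} \<union> {p\<in>NZ \<times> NZ. g1 (snd p) = gz (fst p)}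
     \<union> {p\<in>NZ \<times> NZ. gz (fst p) = snd p + g1 (snd p)}) \<le> 3 * card (NZ::(bit^'k) set)"
  proof -
    have i1: "\<And>x u. g1 u = x \<Longrightarrow> u = inv g1 x" using inj(1) by (metis inv_f_f)
    have i2: "\<And>x u. gz x = u \<Longrightarrow> x = inv gz u" using inj(3) by (metis inv_f_f)
    have "card {p\<in>NZ \<times> NZ. snd p = gz (fst p)} \<le> card (NZ::(bit^'k) set)"
      by (rule graph_card1[where h = "gz"]) auto
    moreover have "card {p\<in>NZ \<times> NZ. g1 (snd p) = gz (fst p)} \<le> card (NZ::(bit^'k) set)"
      by (rule graph_card1[where h = "\<lambda>x. inv g1 (gz x)"]) (auto intro: i1)
    moreover have "card {p\<in>NZ \<times> NZ. gz (fst p) = snd p + g1 (snd p)} \<le> card (NZ::(bit^'k) set)"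
    proof (rule graph_card2[where h = "\<lambda>u. inv gz (u + g1 u)"])
      show "finite (NZ::(bit^'k) set)" by simp
      fix x u :: "bit^'k" assume "x \<in> NZ" "u \<in> NZ" and h: "gz x = u + g1 u"
      from h show "x = inv gz (u + g1 u)" by (rule i2)
    qed
    moreover note card_Un3_le[of "{p\<in>NZ \<times> NZ. snd p = gz (fst p)}" "{p\<in>NZ \<times> NZ. g1 (snd p) = gz (fst p)}"
      "{p\<in>NZ \<times> NZ. gz (fst p) = snd p + g1 (snd p)}"]
    ultimately show ?thesis by linarith
  qed
  fix x b1 :: "bit^'k" assume x: "x \<in> NZ" and b1: "b1 \<in> NZ"
  show "card (NZ::(bit^'k) set) * (\<Sum>b2\<in>NZ. card (S True False True x b1 b2)) \<le> card (GL::(bit^'k^'k) set)"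
  proof -
    have "(\<Sum>b2\<in>NZ. card (S True False True x b1 b2)) \<le> card {M\<in>GL. M *v x = b1}"
    proof (rule sum_disj_le)
      fix w w' :: "bit^'k" assume ww: "w \<noteq> w'"
      have "False" if "M \<in> S True False True x b1 w" "M \<in> S True False True x b1 w'" for M
      proof -
        have "M *v w = g1 b1" "M *v w' = g1 b1" "invertible M" using that by (auto simp: S_TFT GL_def)
        then have "w = w'" using Mv_eq_iff by metis
        then show False using ww by simp
      qed
      then show "S True False True x b1 w \<inter> S True False True x b1 w' = {}" by blast
    qed (auto simp: S_TFT)
    moreover have "card (NZ::(bit^'k) set) * card {M\<in>GL. M *v x = b1} \<le> card (GL::(bit^'k^'k) set)"
      using x by (intro K1) (simp add: NZ_def)
    ultimately show ?thesis by (meson le_trans mult_le_mono2)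
  qed
  assume nsp: "(x, b1) \<notin> {p\<in>NZ \<times> NZ. snd p = gz (fst p)} \<union> {p\<in>NZ \<times> NZ. g1 (snd p) = gz (fst p)}
     \<union> {p\<in>NZ \<times> NZ. gz (fst p) = snd p + g1 (snd p)}"
  have x0: "x \<noteq> 0" and b0: "b1 \<noteq> 0" using x b1 by (auto simp: NZ_def)
  have s1: "b1 \<noteq> gz x" and s2: "g1 b1 \<noteq> gz x" and s3: "gz x \<noteq> b1 + g1 b1" using nsp x b1 by auto
  show "\<exists>c. card (NZ::(bit^'k) set) * (card (NZ::(bit^'k) set) - 1) * card (S True False True x b1 c) \<le> card (GL::(bit^'k^'k) set) \<and>
     (\<forall>w\<in>NZ. w \<noteq> c \<longrightarrow> card (NZ::(bit^'k) set) * (card (NZ::(bit^'k) set) - 1) * (card (NZ::(bit^'k) set) - 3) * card (S True False True x b1 w) \<le> card (GL::(bit^'k^'k) set))"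
  proof (intro exI conjI ballI impI)
    show "card (NZ::(bit^'k) set) * (card (NZ::(bit^'k) set) - 1) * card (S True False True x b1 x) \<le> card (GL::(bit^'k^'k) set)"
    proof (cases "g2 x = x")
      case True
      have "S True False True x b1 x = {}"
      proof -
        have "False" if "M \<in> S True False True x b1 x" for M
          using that s1 True unfolding S_TFT by auto
        then show ?thesis by blast
      qed
      then show ?thesis by simp
    next
      case False
      show ?thesis
      proof (rule mult_card_mono)
        show "S True False True x b1 x \<subseteq> {M\<in>GL. M *v x = b1 \<and> M *v g2 x = gz x}" by (auto simp: S_TFT)
        show "finite {M\<in>GL. M *v x = b1 \<and> M *v g2 x = gz x}" by simp
        show "card (NZ::(bit^'k) set) * (card (NZ::(bit^'k) set) - 1) * card {M\<in>GL. M *v x = b1 \<and> M *v g2 x = gz x} \<le> card (GL::(bit^'k^'k) set)"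
          using x0 False nz by (intro K2) auto
      qed
    qed
    fix w :: "bit^'k" assume w: "w \<in> NZ" "w \<noteq> x"
    show "card (NZ::(bit^'k) set) * (card (NZ::(bit^'k) set) - 1) * (card (NZ::(bit^'k) set) - 3) * card (S True False True x b1 w) \<le> card (GL::(bit^'k^'k) set)"
    proof -
      have eq: "S True False True x b1 w = {M\<in>GL. M *v x = b1 \<and> M *v w = g1 b1 \<and> M *v g2 w = gz x}"
        by (rule S_TFT)
      show ?thesis unfolding eq
      proof (rule K3e)
        fix M :: "bit^'k^'k" assume M: "M \<in> GL" "M *v x = b1" "M *v w = g1 b1" "M *v g2 w = gz x"
        have inv: "invertible M" using M by (simp add: GL_def)
        have w0: "w \<noteq> 0" using w by (simp add: NZ_def)
        show "ind3 x w (g2 w)"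
          unfolding ind3_def
        proof (intro conjI)
          show "x \<noteq> 0" "w \<noteq> 0" "g2 w \<noteq> 0" using x0 w0 nz by auto
          show "x \<noteq> w" using w(2) by auto
          show "x \<noteq> g2 w" using tr_eq[OF inv M(2) M(4)] s1 by auto
          show "w \<noteq> g2 w" using tr_eq[OF inv M(3) M(4)] s2 by auto
          have "b1 + g1 b1 + gz x \<noteq> 0" unfolding s3z using s3 .
          then show "x + w + g2 w \<noteq> 0" using tr_sum[OF inv M(2) M(3) M(4)] by blast
        qed
      qed
    qed
  qed
qed

end

(* ---- from P5d.thy ---- *)
context core begin

lemma TFF:
  assumes n7: "card (NZ::(bit^'k) set) \<ge> 7"
  shows "(\<Sum>x\<in>NZ. \<Sum>b1\<in>NZ. \<Sum>b2\<in>NZ. card (S True False False x b1 b2)) \<le> 5 * card (GL::(bit^'k^'k) set)"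
proof -
  have sw: "(\<Sum>x\<in>NZ. \<Sum>b1\<in>NZ. \<Sum>b2\<in>NZ. card (S True False False x b1 b2))
     = (\<Sum>x\<in>NZ. \<Sum>b2\<in>NZ. \<Sum>b1\<in>NZ. card (S True False False x b1 b2))"
    by (rule sum.cong[OF refl]) (rule sum.swap)
  have "(\<Sum>x\<in>NZ. \<Sum>b2\<in>NZ. \<Sum>b1\<in>NZ. card (S True False False x b1 b2)) \<le> 5 * card (GL::(bit^'k^'k) set)"
  proof (rule scheme[where Sp = "{p\<in>NZ \<times> NZ. snd p = gz (fst p)} \<union> {p\<in>NZ \<times> NZ. snd p = fst p}
     \<union> {p\<in>NZ \<times> NZ. snd p = fst p + gz (fst p)}"])
    show "finite (NZ::(bit^'k) set)" by simp
    show "card (NZ::(bit^'k) set) = card (NZ::(bit^'k) set)" ..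
    show "7 \<le> card (NZ::(bit^'k) set)" by (rule n7)
    show "{p\<in>NZ \<times> NZ. snd p = gz (fst p)} \<union> {p\<in>NZ \<times> NZ. snd p = fst p}
     \<union> {p\<in>NZ \<times> NZ. snd p = fst p + gz (fst p)} \<subseteq> NZ \<times> NZ" by auto
    show "card ({p\<in>NZ \<times> NZ. snd p = gz (fst p)} \<union> {p\<in>NZ \<times> NZ. snd p = fst p}
     \<union> {p\<in>NZ \<times> NZ. snd p = fst p + gz (fst p)}) \<le> 3 * card (NZ::(bit^'k) set)"
    proof -
      have "card {p\<in>NZ \<times> NZ. snd p = gz (fst p)} \<le> card (NZ::(bit^'k) set)"
        by (rule graph_card1[where h = "gz"]) auto
      moreover have "card {p\<in>(NZ::(bit^'k) set) \<times> NZ. snd p = fst p} \<le> card (NZ::(bit^'k) set)"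
      proof -
        have "{p\<in>(NZ::(bit^'k) set) \<times> NZ. snd p = fst p} \<subseteq> (\<lambda>x. (x,x)) ` NZ" by auto
        then show ?thesis by (meson card_image_le card_mono finite_any le_trans)
      qed
      moreover have "card {p\<in>NZ \<times> NZ. snd p = fst p + gz (fst p)} \<le> card (NZ::(bit^'k) set)"
        by (rule graph_card1[where h = "\<lambda>x. x + gz x"]) auto
      moreover note card_Un3_le[of "{p\<in>NZ \<times> NZ. snd p = gz (fst p)}" "{p\<in>NZ \<times> NZ. snd p = fst p}"
        "{p\<in>NZ \<times> NZ. snd p = fst p + gz (fst p)}"]
      ultimately show ?thesis by linarith
    qed
    fix x b2 :: "bit^'k" assume x: "x \<in> NZ" and b2: "b2 \<in> NZ"
    show "card (NZ::(bit^'k) set) * (\<Sum>b1\<in>NZ. card (S True False False x b1 b2)) \<le> card (GL::(bit^'k^'k) set)"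
    proof -
      have "(\<Sum>b1\<in>NZ. card (S True False False x b1 b2)) \<le> card {M\<in>GL. M *v gz x = g2 b2}"
        by (rule sum_disj_le) (auto simp: S_TFF)
      moreover have "card (NZ::(bit^'k) set) * card {M\<in>GL. M *v gz x = g2 b2} \<le> card (GL::(bit^'k^'k) set)"
        using x nz by (intro K1) (simp add: NZ_def)
      ultimately show ?thesis by (meson le_trans mult_le_mono2)
    qed
    assume nsp: "(x, b2) \<notin> {p\<in>NZ \<times> NZ. snd p = gz (fst p)} \<union> {p\<in>NZ \<times> NZ. snd p = fst p}
     \<union> {p\<in>NZ \<times> NZ. snd p = fst p + gz (fst p)}"
    have x0: "x \<noteq> 0" and b0: "b2 \<noteq> 0" using x b2 by (auto simp: NZ_def)
    have s1: "b2 \<noteq> gz x" and s2: "b2 \<noteq> x" and s3: "b2 \<noteq> x + gz x" using nsp x b2 by auto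
    let ?c = "g2 b2"
    show "\<exists>c. card (NZ::(bit^'k) set) * (card (NZ::(bit^'k) set) - 1) * card (S True False False x c b2) \<le> card (GL::(bit^'k^'k) set) \<and>
     (\<forall>w\<in>NZ. w \<noteq> c \<longrightarrow> card (NZ::(bit^'k) set) * (card (NZ::(bit^'k) set) - 1) * (card (NZ::(bit^'k) set) - 3) * card (S True False False x w b2) \<le> card (GL::(bit^'k^'k) set))"
    proof (intro exI conjI ballI impI)
      show "card (NZ::(bit^'k) set) * (card (NZ::(bit^'k) set) - 1) * card (S True False False x ?c b2) \<le> card (GL::(bit^'k^'k) set)"
      proof (rule mult_card_mono)
        show "S True False False x ?c b2 \<subseteq> {M\<in>GL. M *v b2 = g1 ?c \<and> M *v gz x = g2 b2}" by (auto simp: S_TFF)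
        show "finite {M\<in>GL. M *v b2 = g1 ?c \<and> M *v gz x = g2 b2}" by simp
        show "card (NZ::(bit^'k) set) * (card (NZ::(bit^'k) set) - 1) * card {M\<in>GL. M *v b2 = g1 ?c \<and> M *v gz x = g2 b2} \<le> card (GL::(bit^'k^'k) set)"
          using x0 b0 s1 nz by (intro K2) auto
      qed
      fix w :: "bit^'k" assume w: "w \<in> NZ" "w \<noteq> ?c"
      show "card (NZ::(bit^'k) set) * (card (NZ::(bit^'k) set) - 1) * (card (NZ::(bit^'k) set) - 3) * card (S True False False x w b2) \<le> card (GL::(bit^'k^'k) set)"
      proof -
        have eq: "S True False False x w b2 = {M\<in>GL. M *v x = w \<and> M *v b2 = g1 w \<and> M *v gz x = g2 b2}"
          by (rule S_TFF)
        show ?thesis unfolding eq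
        proof (rule K3e)
          fix M :: "bit^'k^'k" assume M: "M \<in> GL" "M *v x = w" "M *v b2 = g1 w" "M *v gz x = g2 b2"
          have inv: "invertible M" using M by (simp add: GL_def)
          show "ind3 x b2 (gz x)"
            unfolding ind3_def
          proof (intro conjI)
            show "x \<noteq> 0" "b2 \<noteq> 0" "gz x \<noteq> 0" using x0 b0 nz by auto
            show "x \<noteq> b2" using s2 by auto
            show "x \<noteq> gz x" using tr_eq[OF inv M(2) M(4)] w(2) by auto
            show "b2 \<noteq> gz x" using s1 by auto
            show "x + b2 + gz x \<noteq> 0" unfolding s3z' using s3 .
          qed
        qed
      qed
    qed
  qed
  then show ?thesis unfolding sw .
qed

end

(* ---- from P6.thy ---- *)

lemma NZ_cases: "card (NZ::(bit^'k) set) \<le> 5 \<or> card (NZ::(bit^'k) set) \<ge> 7"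
proof -
  have "2 ^ CARD('k) \<noteq> (7::nat)"
  proof
    assume h: "2 ^ CARD('k) = (7::nat)"
    have "CARD('k) \<noteq> 0" by simp
    then have "even ((2::nat) ^ CARD('k))" by simp
    then show False using h by simp
  qed
  then show ?thesis unfolding card_NZ by linarith
qed

context core begin

lemma card_S_le: "card (S e1 e2 e3 x b1 b2) \<le> card (S (\<not>e1) (\<not>e2) (\<not>e3) x b1 b2)"
proof (rule card_inj_on_le[where f = matrix_inv])
  show "inj_on matrix_inv (S e1 e2 e3 x b1 b2)"
  proof (rule inj_onI)
    fix M M' assume "M \<in> S e1 e2 e3 x b1 b2" "M' \<in> S e1 e2 e3 x b1 b2" and e: "matrix_inv M = matrix_inv M'"
    then have "invertible M" "invertible M'" by (auto simp: S_def GL_def)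
    moreover have "matrix_inv (matrix_inv M) = matrix_inv (matrix_inv M')" using e by simp
    ultimately show "M = M'" by (simp add: mi_mi)
  qed
  show "matrix_inv ` S e1 e2 e3 x b1 b2 \<subseteq> S (\<not> e1) (\<not> e2) (\<not> e3) x b1 b2"
  proof
    fix N assume "N \<in> matrix_inv ` S e1 e2 e3 x b1 b2"
    then obtain M where M: "M \<in> S e1 e2 e3 x b1 b2" "N = matrix_inv M" by blast
    have inv: "invertible M" using M(1) by (simp add: S_def GL_def)
    have st: "\<And>e a. st (\<not> e) (matrix_inv M) a = st e M a" using st_inv[OF inv] by simp
    show "N \<in> S (\<not> e1) (\<not> e2) (\<not> e3) x b1 b2"
      using M inv invertible_mi[OF inv] unfolding S_def GL_def by (simp add: st)
  qed
  show "finite (S (\<not> e1) (\<not> e2) (\<not> e3) x b1 b2)" by simp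
qed

lemma card_S_eq: "card (S e1 e2 e3 x b1 b2) = card (S (\<not>e1) (\<not>e2) (\<not>e3) x b1 b2)"
  using card_S_le[of e1 e2 e3 x b1 b2] card_S_le[of "\<not>e1" "\<not>e2" "\<not>e3" x b1 b2] by simp

lemma core_T:
  assumes "card (NZ::(bit^'k) set) \<ge> 7"
  shows "(\<Sum>x\<in>NZ. \<Sum>b1\<in>NZ. \<Sum>b2\<in>NZ. card (S True e2 e3 x b1 b2)) \<le> 5 * card (GL::(bit^'k^'k) set)"
  using TTT[OF assms] TTF[OF assms] TFT[OF assms] TFF[OF assms] by (cases e2; cases e3) auto

lemma core_all:
  assumes "card (NZ::(bit^'k) set) \<ge> 7"
  shows "(\<Sum>x\<in>NZ. \<Sum>b1\<in>NZ. \<Sum>b2\<in>NZ. card (S e1 e2 e3 x b1 b2)) \<le> 5 * card (GL::(bit^'k^'k) set)"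
proof (cases e1)
  case True then show ?thesis using core_T[OF assms] by simp
next
  case False
  have "(\<Sum>x\<in>NZ. \<Sum>b1\<in>NZ. \<Sum>b2\<in>NZ. card (S e1 e2 e3 x b1 b2))
     = (\<Sum>x\<in>NZ. \<Sum>b1\<in>NZ. \<Sum>b2\<in>NZ. card (S True (\<not>e2) (\<not>e3) x b1 b2))"
    using False card_S_eq[of e1 e2 e3] by simp
  then show ?thesis using core_T[OF assms] by simp
qed

lemma cnt_decomp:
  assumes x: "x \<in> NZ"
  shows "card {M\<in>GL. st e3 M (g2 (st e2 M (g1 (st e1 M x)))) = gz x}
     = (\<Sum>b1\<in>NZ. \<Sum>b2\<in>NZ. card (S e1 e2 e3 x b1 b2))"
proof -
  define A where "A = {M\<in>GL. st e3 M (g2 (st e2 M (g1 (st e1 M x)))) = gz x}"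
  have x0: "x \<noteq> 0" using x by (simp add: NZ_def)
  have "card A = (\<Sum>b1\<in>NZ. card {M\<in>A. st e1 M x = b1})"
    by (rule card_fibers) (use x0 st_nz in \<open>auto simp: A_def GL_def NZ_def\<close>)
  also have "\<dots> = (\<Sum>b1\<in>NZ. \<Sum>b2\<in>NZ. card (S e1 e2 e3 x b1 b2))"
  proof (rule sum.cong[OF refl])
    fix b1 assume b1: "b1 \<in> (NZ::(bit^'k) set)"
    have g0: "g1 b1 \<noteq> 0" using b1 nz by (simp add: NZ_def)
    define A1 where "A1 = {M\<in>A. st e1 M x = b1}"
    have "card A1 = (\<Sum>b2\<in>NZ. card {M\<in>A1. st e2 M (g1 b1) = b2})"
      by (rule card_fibers) (use g0 st_nz in \<open>auto simp: A1_def A_def GL_def NZ_def\<close>)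
    also have "\<dots> = (\<Sum>b2\<in>NZ. card (S e1 e2 e3 x b1 b2))"
    proof (rule sum.cong[OF refl])
      fix b2 assume "b2 \<in> (NZ::(bit^'k) set)"
      have "{M\<in>A1. st e2 M (g1 b1) = b2} = S e1 e2 e3 x b1 b2" by (auto simp: A1_def A_def S_def)
      then show "card {M\<in>A1. st e2 M (g1 b1) = b2} = card (S e1 e2 e3 x b1 b2)" by simp
    qed
    finally show "card {M\<in>A. st e1 M x = b1} = (\<Sum>b2\<in>NZ. card (S e1 e2 e3 x b1 b2))"
      unfolding A1_def .
  qed
  finally show ?thesis unfolding A_def .
qed

lemma core_final:
  "(\<Sum>x\<in>NZ. card {M\<in>GL. st e3 M (g2 (st e2 M (g1 (st e1 M x)))) = gz x}) \<le> 5 * card (GL::(bit^'k^'k) set)"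
proof (cases "card (NZ::(bit^'k) set) \<ge> 7")
  case True
  have "(\<Sum>x\<in>NZ. card {M\<in>GL. st e3 M (g2 (st e2 M (g1 (st e1 M x)))) = gz x})
     = (\<Sum>x\<in>NZ. \<Sum>b1\<in>NZ. \<Sum>b2\<in>NZ. card (S e1 e2 e3 x b1 b2))"
    by (rule sum.cong[OF refl]) (rule cnt_decomp)
  then show ?thesis using core_all[OF True] by simp
next
  case False
  then have n5: "card (NZ::(bit^'k) set) \<le> 5" using NZ_cases by auto
  have "(\<Sum>x\<in>NZ. card {M\<in>GL. st e3 M (g2 (st e2 M (g1 (st e1 M x)))) = gz x})
     \<le> (\<Sum>x\<in>(NZ::(bit^'k) set). card (GL::(bit^'k^'k) set))"
    by (rule sum_mono) (intro card_mono, auto)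
  also have "\<dots> = card (NZ::(bit^'k) set) * card (GL::(bit^'k^'k) set)" by simp
  also have "\<dots> \<le> 5 * card (GL::(bit^'k^'k) set)" using n5 by simp
  finally show ?thesis .
qed

end


(* ---- from P7.thy ---- *)

abbreviation GLT :: "nat \<Rightarrow> (bit^'k^'k) list set" where "GLT d \<equiv> GL_tuples d"

lemma wa_Nil[simp]: "word_apply s [] v = v" by (simp add: word_apply_def)
lemma wa_Cons[simp]: "word_apply s (l # w) v = word_apply s w (lit_mat s l *v v)"
  by (simp add: word_apply_def)
lemma wa_append: "word_apply s (a @ b) v = word_apply s b (word_apply s a v)"
  by (simp add: word_apply_def)

lemma finite_GLT[simp]: "finite (GL_tuples d :: (bit^'k^'k) list set)"
proof -
  have "GL_tuples d \<subseteq> {xs::(bit^'k^'k) list. set xs \<subseteq> UNIV \<and> length xs = d}"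
    by (auto simp: GL_tuples_def)
  then show ?thesis using finite_lists_length_eq[of "UNIV::(bit^'k^'k) set" d] finite_subset by auto
qed

lemma finite_words[simp]: "finite (words d len)"
proof -
  have "words d len \<subseteq> {xs. set xs \<subseteq> {..<d} \<times> (UNIV::bool set) \<and> length xs = len}"
    by (auto simp: words_def)
  moreover have "finite ({..<d} \<times> (UNIV::bool set))" by simp
  ultimately show ?thesis using finite_lists_length_eq finite_subset by blast
qed

lemma lit_inv:
  assumes "s \<in> GL_tuples d" "fst l < d"
  shows "invertible (lit_mat (s :: (bit^'k^'k) list) l)"
proof -
  have "s ! fst l \<in> set s" using assms by (simp add: GL_tuples_def)
  then have "invertible (s ! fst l)" using assms by (auto simp: GL_tuples_def)
  then show ?thesis by (simp add: lit_mat_def invertible_mi)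
qed

lemma wa_zero:
  assumes "s \<in> GL_tuples d" "\<forall>l\<in>set w. fst l < d"
  shows "word_apply (s :: (bit^'k^'k) list) w 0 = 0"
  using assms(2) by (induction w) auto

lemma wa_inj:
  assumes "s \<in> GL_tuples d" "\<forall>l\<in>set w. fst l < d"
  shows "inj (word_apply (s :: (bit^'k^'k) list) w)"
  using assms(2)
proof (induction w)
  case Nil then show ?case by (simp add: inj_on_def)
next
  case (Cons l w)
  have "inj ((*v) (lit_mat s l))" using lit_inv[OF assms(1)] Cons.prems by (simp add: inj_matrix_vector_mult)
  moreover have "inj (word_apply s w)" using Cons by simp
  ultimately have "inj (word_apply s w \<circ> (*v) (lit_mat s l))" by (rule inj_compose[rotated])
  then show ?case by (simp add: o_def)
qed

lemma wa_upd:
  assumes "j \<notin> fst ` set w"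
  shows "word_apply (s[j := M]) w v = word_apply s w v"
  using assms
proof (induction w arbitrary: v)
  case Nil then show ?case by simp
next
  case (Cons l w)
  have "lit_mat (s[j := M]) l = lit_mat s l" using Cons.prems by (auto simp: lit_mat_def)
  then show ?case using Cons by simp
qed

lemma lit_upd:
  assumes "j < length s" "fst l = j"
  shows "lit_mat (s[j := M]) l *v y = st (snd l) M y"
  using assms by (simp add: lit_mat_def st_def)

lemma decomp1:
  assumes "count_list (map fst w) j = Suc c"
  shows "\<exists>w0 l w'. w = w0 @ l # w' \<and> fst l = j \<and> j \<notin> fst ` set w0 \<and> count_list (map fst w') j = c"
  using assms
proof (induction w)
  case Nil then show ?case by simp
next
  case (Cons a w)
  show ?case
  proof (cases "fst a = j")
    case True
    then show ?thesis using Cons.prems by (intro exI[of _ "[]"] exI[of _ a] exI[of _ w]) simp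
  next
    case False
    then have "count_list (map fst w) j = Suc c" using Cons.prems by simp
    then obtain w0 l w' where "w = w0 @ l # w'" "fst l = j" "j \<notin> fst ` set w0" "count_list (map fst w') j = c"
      using Cons.IH by blast
    then show ?thesis using False by (intro exI[of _ "a # w0"] exI[of _ l] exI[of _ w']) auto
  qed
qed

lemma decomp3:
  assumes "letter_count w j = 3"
  shows "\<exists>w0 l1 w1 l2 w2 l3 w3. w = w0 @ l1 # w1 @ l2 # w2 @ l3 # w3 \<and>
     fst l1 = j \<and> fst l2 = j \<and> fst l3 = j \<and>
     j \<notin> fst ` set w0 \<and> j \<notin> fst ` set w1 \<and> j \<notin> fst ` set w2 \<and> j \<notin> fst ` set w3"
proof -
  have "count_list (map fst w) j = Suc 2" using assms by (simp add: letter_count_def)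
  then obtain w0 l1 r1 where a: "w = w0 @ l1 # r1" "fst l1 = j" "j \<notin> fst ` set w0" "count_list (map fst r1) j = Suc 1"
    using decomp1 by (metis numeral_2_eq_2 One_nat_def)
  then obtain w1 l2 r2 where b: "r1 = w1 @ l2 # r2" "fst l2 = j" "j \<notin> fst ` set w1" "count_list (map fst r2) j = Suc 0"
    using decomp1 by (metis One_nat_def)
  then obtain w2 l3 w3 where c: "r2 = w2 @ l3 # w3" "fst l3 = j" "j \<notin> fst ` set w2" "count_list (map fst w3) j = 0"
    using decomp1 by metis
  have "j \<notin> fst ` set w3" using c(4) by (simp add: count_list_0_iff)
  then show ?thesis using a b c by blast
qed


(* ---- from P8.thy ---- *)

definition cj :: "bit^'k^'k \<Rightarrow> (bit^'k^'k) list \<Rightarrow> (bit^'k^'k) list" where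
  "cj h s = map (\<lambda>A. matrix_inv h ** A ** h) s"

lemma mul_cancel1: "invertible (h::bit^'k^'k) \<Longrightarrow> (X ** h) ** matrix_inv h = X"
  by (simp add: matrix_mul_assoc[symmetric] inv_props)
lemma mul_cancel2: "invertible (h::bit^'k^'k) \<Longrightarrow> (X ** matrix_inv h) ** h = X"
  by (simp add: matrix_mul_assoc[symmetric] inv_props)

lemma invertible_one: "invertible (mat 1 :: bit^'k^'k)"
  unfolding invertible_def by (rule exI[of _ "mat 1"]) simp

lemma mi_conj:
  assumes h: "invertible (h::bit^'k^'k)" and A: "invertible A"
  shows "matrix_inv (matrix_inv h ** A ** h) = matrix_inv h ** matrix_inv A ** h"
proof (rule mi_unique)
  show "invertible (matrix_inv h ** A ** h)" using h A by (simp add: invertible_mult invertible_mi)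
  show "matrix_inv h ** A ** h ** (matrix_inv h ** matrix_inv A ** h) = mat 1"
    using h A by (simp add: matrix_mul_assoc mul_cancel1 inv_props)
qed

lemma lit_cj:
  assumes "s \<in> GL_tuples d" "fst l < d" "invertible h"
  shows "lit_mat (cj h s) l = matrix_inv h ** lit_mat s l ** h"
proof -
  have len: "fst l < length s" using assms by (simp add: GL_tuples_def)
  have "s ! fst l \<in> set s" using len by simp
  then have inv: "invertible (s ! fst l)" using assms by (auto simp: GL_tuples_def)
  show ?thesis using len inv assms(3) by (simp add: lit_mat_def cj_def mi_conj)
qed

lemma wa_cj:
  assumes "s \<in> GL_tuples d" "\<forall>l\<in>set w. fst l < d" "invertible h"
  shows "word_apply (cj h s) w y = matrix_inv h *v word_apply s w (h *v y)"
  using assms(2)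
proof (induction w arbitrary: y)
  case Nil then show ?case using assms(3) by simp
next
  case (Cons l w)
  have fl: "fst l < d" using Cons.prems by simp
  have lc: "lit_mat (cj h s) l = matrix_inv h ** lit_mat s l ** h" by (rule lit_cj[OF assms(1) fl assms(3)])
  have "h *v (lit_mat (cj h s) l *v y) = lit_mat s l *v (h *v y)"
    unfolding lc using assms(3) by (simp add: matrix_vector_mul_assoc matrix_mul_assoc inv_props)
  then show ?case using Cons by simp
qed

lemma cj_GLT: "s \<in> GL_tuples d \<Longrightarrow> invertible h \<Longrightarrow> cj h s \<in> GL_tuples d"
  by (auto simp: GL_tuples_def cj_def invertible_mult invertible_mi)

lemma cj_inj: "invertible h \<Longrightarrow> inj (cj h)"
proof -
  assume h: "invertible h"
  have "inj (\<lambda>A. matrix_inv h ** A ** h)"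
  proof (rule injI)
    fix A B assume "matrix_inv h ** A ** h = matrix_inv h ** B ** h"
    then have "h ** (matrix_inv h ** A ** h) ** matrix_inv h = h ** (matrix_inv h ** B ** h) ** matrix_inv h" by simp
    then show "A = B" using h by (simp add: matrix_mul_assoc mul_cancel1 inv_props)
  qed
  then show "inj (cj h)" unfolding cj_def by (simp add: inj_def)
qed

lemma card_fix_le:
  assumes w: "w \<in> words d len" and a: "a \<noteq> 0" and b: "b \<noteq> 0"
  shows "card {s\<in>GL_tuples d. word_apply (s::(bit^'k^'k) list) w a = a}
       \<le> card {s\<in>GL_tuples d. word_apply (s::(bit^'k^'k) list) w b = b}"
proof -
  obtain h :: "bit^'k^'k" where h: "invertible h" "h *v b = a" using trans1[OF b a] by blast
  have wl: "\<forall>l\<in>set w. fst l < d" using w by (simp add: words_def)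
  show ?thesis
  proof (rule card_inj_on_le[where f = "cj h"])
    show "inj_on (cj h) {s\<in>GL_tuples d. word_apply s w a = a}" using cj_inj[OF h(1)] by (simp add: inj_on_def inj_def)
    show "finite {s\<in>GL_tuples d. word_apply (s::(bit^'k^'k) list) w b = b}" by simp
    show "cj h ` {s\<in>GL_tuples d. word_apply s w a = a} \<subseteq> {s\<in>GL_tuples d. word_apply s w b = b}"
    proof
      fix t assume "t \<in> cj h ` {s\<in>GL_tuples d. word_apply s w a = a}"
      then obtain s where s: "s \<in> GL_tuples d" "word_apply s w a = a" "t = cj h s" by blast
      have "word_apply t w b = matrix_inv h *v word_apply s w (h *v b)"
        using wa_cj[OF s(1) wl h(1)] s(3) by simp
      also have "\<dots> = b" using s(2) h by (metis mi_left)
      finally show "t \<in> {s\<in>GL_tuples d. word_apply s w b = b}" using cj_GLT[OF s(1) h(1)] s(3) by simp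
    qed
  qed
qed

lemma card_filter_sum: "finite B \<Longrightarrow> card {b\<in>B. P b} = (\<Sum>b\<in>B. if P b then 1 else 0)"
  by (simp add: sum.inter_filter[symmetric])

lemma sum_card_swap:
  assumes "finite A" "finite B"
  shows "(\<Sum>a\<in>A. card {b\<in>B. P a b}) = (\<Sum>b\<in>B. card {a\<in>A. P a b})"
  using assms by (simp add: card_filter_sum sum.swap[of _ A B])

definition RR :: "nat \<Rightarrow> nat \<Rightarrow> (bit^'k^'k) list set" where
  "RR j d = {r\<in>GL_tuples d. r ! j = mat 1}"

lemma split_bij:
  assumes "j < d"
  shows "bij_betw (\<lambda>(r, M). r[j := M]) (RR j d \<times> (GL::(bit^'k^'k) set)) (GL_tuples d)"
proof (rule bij_betw_imageI)
  show "inj_on (\<lambda>(r, M). r[j := M]) (RR j d \<times> (GL::(bit^'k^'k) set))"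
  proof (rule inj_onI, clarify)
    fix r r' :: "(bit^'k^'k) list" and M M' :: "bit^'k^'k" assume r: "r \<in> RR j d" "M \<in> (GL::(bit^'k^'k) set)" "r' \<in> RR j d" "M' \<in> (GL::(bit^'k^'k) set)"
      and e: "r[j := M] = r'[j := M']"
    have l: "length r = d" "length r' = d" "r ! j = mat 1" "r' ! j = mat 1" using r by (auto simp: RR_def GL_tuples_def)
    have "M = r[j := M] ! j" using l assms by simp
    also have "\<dots> = M'" using e l assms by simp
    finally have MM: "M = M'" .
    have "r = r[j := mat 1]" using l(3) list_update_id[of r j] by simp
    also have "\<dots> = (r[j := M])[j := mat 1]" by simp
    also have "\<dots> = (r'[j := M'])[j := mat 1]" using e by simp
    also have "\<dots> = r'[j := mat 1]" by simp
    also have "\<dots> = r'" using l(4) list_update_id[of r' j] by simp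
    finally show "r = r' \<and> M = M'" using MM by simp
  qed
  show "(\<lambda>(r, M). r[j := M]) ` (RR j d \<times> (GL::(bit^'k^'k) set)) = GL_tuples d"
  proof
    show "(\<lambda>(r, M). r[j := M]) ` (RR j d \<times> (GL::(bit^'k^'k) set)) \<subseteq> GL_tuples d"
    proof clarify
      fix r :: "(bit^'k^'k) list" and M :: "bit^'k^'k" assume r: "r \<in> RR j d" "M \<in> (GL::(bit^'k^'k) set)"
      have "set (r[j := M]) \<subseteq> insert M (set r)" by (rule set_update_subset_insert)
      then show "r[j := M] \<in> GL_tuples d" using r by (auto simp: RR_def GL_tuples_def GL_def)
    qed
    show "GL_tuples d \<subseteq> (\<lambda>(r, M). r[j := M]) ` (RR j d \<times> (GL::(bit^'k^'k) set))"
    proof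
      fix s :: "(bit^'k^'k) list" assume s: "s \<in> GL_tuples d"
      have len: "length s = d" using s by (simp add: GL_tuples_def)
      have "s ! j \<in> set s" using len assms by simp
      then have sj: "s ! j \<in> GL" using s by (auto simp: GL_tuples_def GL_def)
      have "set (s[j := mat 1]) \<subseteq> insert (mat 1) (set s)" by (rule set_update_subset_insert)
      then have "s[j := mat 1] \<in> RR j d" using s len assms invertible_one by (auto simp: RR_def GL_tuples_def)
      moreover have "s = (s[j := mat 1])[j := s ! j]" by simp
      ultimately show "s \<in> (\<lambda>(r, M). r[j := M]) ` (RR j d \<times> GL)" using sj by force
    qed
  qed
qed

lemma sum_split:
  assumes "j < d"
  shows "(\<Sum>s\<in>GL_tuples d. f s) = (\<Sum>r\<in>RR j d. \<Sum>M\<in>(GL::(bit^'k^'k) set). f (r[j := M]))"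
proof -
  have "(\<Sum>s\<in>GL_tuples d. f s) = (\<Sum>p\<in>RR j d \<times> (GL::(bit^'k^'k) set). f ((\<lambda>(r, M). r[j := M]) p))"
    by (rule sum.reindex_bij_betw[OF split_bij[OF assms], symmetric])
  also have "\<dots> = (\<Sum>r\<in>RR j d. \<Sum>M\<in>(GL::(bit^'k^'k) set). f (r[j := M]))"
    by (simp add: sum.cartesian_product case_prod_beta)
  finally show ?thesis .
qed


(* ---- from P9a.thy ---- *)

lemma bij_fin: "inj (f::bit^'k \<Rightarrow> bit^'k) \<Longrightarrow> bij f"
  by (simp add: bij_def finite_UNIV_inj_surj)

lemma per_r:
  assumes w: "w \<in> words d len" and j: "j < d" and c3: "letter_count w j = 3"
    and r: "(r::(bit^'k^'k) list) \<in> GL_tuples d"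
  shows "(\<Sum>x\<in>(NZ::(bit^'k) set). card {M\<in>(GL::(bit^'k^'k) set). word_apply (r[j := M]) w x = x}) \<le> 5 * card (GL::(bit^'k^'k) set)"
proof -
  obtain w0 l1 w1 l2 w2 l3 w3 where dec: "w = w0 @ l1 # w1 @ l2 # w2 @ l3 # w3"
    "fst l1 = j" "fst l2 = j" "fst l3 = j" "j \<notin> fst ` set w0" "j \<notin> fst ` set w1"
    "j \<notin> fst ` set w2" "j \<notin> fst ` set w3"
    using decomp3[OF c3] by blast
  have wl: "\<forall>l\<in>set w. fst l < d" using w by (simp add: words_def)
  have wl0: "\<forall>l\<in>set w0. fst l < d" and wl1: "\<forall>l\<in>set w1. fst l < d"
    and wl2: "\<forall>l\<in>set w2. fst l < d" and wl3: "\<forall>l\<in>set w3. fst l < d"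
    using wl unfolding dec(1) by auto
  have lenr: "j < length r" using r j by (simp add: GL_tuples_def)
  define F0 where "F0 = word_apply r w0"
  define F1 where "F1 = word_apply r w1"
  define F2 where "F2 = word_apply r w2"
  define F3 where "F3 = word_apply r w3"
  have eqW0: "word_apply (r[j := M]) w x = word_apply (r[j := M]) w3 (lit_mat (r[j := M]) l3 *v
      word_apply (r[j := M]) w2 (lit_mat (r[j := M]) l2 *v word_apply (r[j := M]) w1
      (lit_mat (r[j := M]) l1 *v word_apply (r[j := M]) w0 x)))" for M x
    unfolding dec(1) by (simp add: wa_append)
  have eqW: "word_apply (r[j := M]) w x
     = F3 (st (snd l3) M (F2 (st (snd l2) M (F1 (st (snd l1) M (F0 x))))))" for M x
    unfolding eqW0 F0_def F1_def F2_def F3_def wa_upd[OF dec(5)] wa_upd[OF dec(6)] wa_upd[OF dec(7)]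
      wa_upd[OF dec(8)] lit_upd[OF lenr dec(2)] lit_upd[OF lenr dec(3)] lit_upd[OF lenr dec(4)] ..
  have i0: "inj F0" unfolding F0_def by (rule wa_inj[OF r wl0])
  have i1: "inj F1" unfolding F1_def by (rule wa_inj[OF r wl1])
  have i2: "inj F2" unfolding F2_def by (rule wa_inj[OF r wl2])
  have i3: "inj F3" unfolding F3_def by (rule wa_inj[OF r wl3])
  have z0: "F0 0 = 0" unfolding F0_def by (rule wa_zero[OF r wl0])
  have z1: "F1 0 = 0" unfolding F1_def by (rule wa_zero[OF r wl1])
  have z2: "F2 0 = 0" unfolding F2_def by (rule wa_zero[OF r wl2])
  have z3: "F3 0 = 0" unfolding F3_def by (rule wa_zero[OF r wl3])
  have b0: "bij F0" by (rule bij_fin[OF i0])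
  have b3: "bij F3" by (rule bij_fin[OF i3])
  define gz where "gz = (\<lambda>y. inv F3 (inv F0 y))"
  have igz: "inj gz"
  proof -
    have a: "inj (inv F3)" by (rule bij_is_inj[OF bij_imp_bij_inv[OF b3]])
    have b: "inj (inv F0)" by (rule bij_is_inj[OF bij_imp_bij_inv[OF b0]])
    have "inj (inv F3 \<circ> inv F0)" using a b by (rule inj_compose)
    moreover have "gz = inv F3 \<circ> inv F0" unfolding gz_def by (simp add: o_def)
    ultimately show ?thesis by simp
  qed
  have iz0: "inv F0 0 = 0" using inv_f_f[OF i0, of 0] z0 by simp
  have iz3: "inv F3 0 = 0" using inv_f_f[OF i3, of 0] z3 by simp
  have gz0: "gz 0 = 0" unfolding gz_def using iz0 iz3 by simp
  interpret C: core F1 F2 gz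
    by unfold_locales (rule i1, rule i2, rule igz, rule z1, rule z2, rule gz0)
  have main: "(\<Sum>y\<in>NZ. card {M\<in>GL. st (snd l3) M (F2 (st (snd l2) M (F1 (st (snd l1) M y)))) = gz y})
      \<le> 5 * card (GL::(bit^'k^'k) set)"
    by (rule C.core_final)
  have img: "F0 ` NZ = NZ"
  proof
    show "F0 ` NZ \<subseteq> NZ" using i0 z0 unfolding NZ_def by (auto, metis injD)
    show "NZ \<subseteq> F0 ` NZ"
    proof
      fix y :: "bit^'k" assume y: "y \<in> NZ"
      have fy: "F0 (inv F0 y) = y" using b0 by (simp add: bij_is_surj surj_f_inv_f)
      have "inv F0 y \<noteq> 0" using y z0 fy by (auto simp: NZ_def)
      then have "inv F0 y \<in> NZ" by (simp add: NZ_def)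
      with fy[symmetric] show "y \<in> F0 ` NZ" by (rule image_eqI)
    qed
  qed
  have inj0: "inj_on F0 NZ" using i0 by (simp add: inj_on_def inj_def)
  have "(\<Sum>y\<in>NZ. card {M\<in>GL. st (snd l3) M (F2 (st (snd l2) M (F1 (st (snd l1) M y)))) = gz y})
     = (\<Sum>y\<in>F0 ` NZ. card {M\<in>GL. st (snd l3) M (F2 (st (snd l2) M (F1 (st (snd l1) M y)))) = gz y})"
    using img by simp
  also have "\<dots> = (\<Sum>x\<in>NZ. card {M\<in>GL. st (snd l3) M (F2 (st (snd l2) M (F1 (st (snd l1) M (F0 x))))) = gz (F0 x)})"
    by (rule sum.reindex[OF inj0, unfolded comp_def])
  also have "\<dots> = (\<Sum>x\<in>NZ. card {M\<in>GL. word_apply (r[j := M]) w x = x})"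
  proof (rule sum.cong[OF refl])
    fix x :: "bit^'k" assume "x \<in> NZ"
    have gzx: "gz (F0 x) = inv F3 x" unfolding gz_def using inv_f_f[OF i0] by simp
    have s3: "\<And>y. F3 (inv F3 y) = y" using b3 by (simp add: bij_is_surj surj_f_inv_f)
    have "\<And>Z. (Z = inv F3 x) \<longleftrightarrow> (F3 Z = x)"
      using s3 inv_f_f[OF i3] by auto
    then show "card {M\<in>GL. st (snd l3) M (F2 (st (snd l2) M (F1 (st (snd l1) M (F0 x))))) = gz (F0 x)}
       = card {M\<in>GL. word_apply (r[j := M]) w x = x}"
      unfolding gzx eqW by simp
  qed
  finally show ?thesis using main by simp
qed


(* ---- from P9b.thy ---- *)

lemma card_GLT: "j < d \<Longrightarrow> card (GL_tuples d :: (bit^'k^'k) list set) = card ((RR j d :: (bit^'k^'k) list set)) * card (GL::(bit^'k^'k) set)"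
  using sum_split[of j d "\<lambda>_. (1::nat)"] by simp

lemma word_bound:
  assumes w: "w \<in> words d len" and j: "j < d" "letter_count w j = 3" and v1: "v1 \<noteq> 0"
  shows "card (NZ::(bit^'k) set) * card {s\<in>GL_tuples d. word_apply (s::(bit^'k^'k) list) w v1 = v1}
      \<le> 5 * card (GL_tuples d :: (bit^'k^'k) list set)"
proof -
  have eqc: "card {s\<in>GL_tuples d. word_apply (s::(bit^'k^'k) list) w x = x}
      = card {s\<in>GL_tuples d. word_apply (s::(bit^'k^'k) list) w v1 = v1}" if "x \<in> NZ" for x
    using card_fix_le[OF w, of x v1] card_fix_le[OF w, of v1 x] that v1 by (simp add: NZ_def)
  have "(\<Sum>x\<in>NZ. card {s\<in>GL_tuples d. word_apply (s::(bit^'k^'k) list) w x = x})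
      = (\<Sum>x\<in>(NZ::(bit^'k) set). card {s\<in>GL_tuples d. word_apply (s::(bit^'k^'k) list) w v1 = v1})"
    by (rule sum.cong[OF refl]) (rule eqc)
  then have "card (NZ::(bit^'k) set) * card {s\<in>GL_tuples d. word_apply (s::(bit^'k^'k) list) w v1 = v1}
      = (\<Sum>x\<in>NZ. card {s\<in>GL_tuples d. word_apply (s::(bit^'k^'k) list) w x = x})"
    by simp
  also have "\<dots> = (\<Sum>s\<in>GL_tuples d. card {x\<in>NZ. word_apply (s::(bit^'k^'k) list) w x = x})"
    by (rule sum_card_swap) simp_all
  also have "\<dots> = (\<Sum>r\<in>(RR j d :: (bit^'k^'k) list set). \<Sum>M\<in>(GL::(bit^'k^'k) set). card {x\<in>NZ. word_apply (r[j := M]) w x = x})"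
    by (rule sum_split[OF j(1)])
  also have "\<dots> = (\<Sum>r\<in>(RR j d :: (bit^'k^'k) list set). \<Sum>x\<in>NZ. card {M\<in>(GL::(bit^'k^'k) set). word_apply (r[j := M]) w x = x})"
    by (rule sum.cong[OF refl], rule sum_card_swap) simp_all
  also have "\<dots> \<le> (\<Sum>r\<in>(RR j d :: (bit^'k^'k) list set). 5 * card (GL::(bit^'k^'k) set))"
  proof (rule sum_mono)
    fix r :: "(bit^'k^'k) list" assume "r \<in> (RR j d :: (bit^'k^'k) list set)"
    then have "r \<in> GL_tuples d" by (simp add: RR_def)
    then show "(\<Sum>x\<in>NZ. card {M\<in>(GL::(bit^'k^'k) set). word_apply (r[j := M]) w x = x}) \<le> 5 * card (GL::(bit^'k^'k) set)"
      by (rule per_r[OF w j(1) j(2)])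
  qed
  also have "\<dots> = card (RR j d :: (bit^'k^'k) list set) * (5 * card (GL::(bit^'k^'k) set))"
    by simp
  also have "\<dots> = 5 * (card (RR j d :: (bit^'k^'k) list set) * card (GL::(bit^'k^'k) set))" by simp
  also have "\<dots> = 5 * card (GL_tuples d :: (bit^'k^'k) list set)"
    by (simp only: card_GLT[OF j(1)])
  finally show ?thesis .
qed


lemma top_bound:
  fixes v1 :: "bit^'k" and Q :: "literal list \<Rightarrow> bool"
  assumes v1: "v1 \<noteq> 0" and d: "d \<ge> 1"
    and Q: "\<And>w. w \<in> words d (2*m) \<Longrightarrow> Q w \<Longrightarrow> \<exists>j<d. letter_count w j = 3"
  shows "cond_prob (measure_pmf (sample_space d m :: (literal list \<times> (bit^'k^'k) list) pmf))
      (\<lambda>(w, s). word_apply s w v1 = v1) (\<lambda>(w, s). Q w) \<le> 5 / real (2 ^ CARD('k) - 1)"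
proof -
  define \<Omega> where "\<Omega> = words d (2*m) \<times> (GL_tuples d :: (bit^'k^'k) list set)"
  have fin: "finite \<Omega>" by (simp add: \<Omega>_def)
  have w0: "replicate (2*m) (0::nat, True) \<in> words d (2*m)" using d by (simp add: words_def)
  have s0: "replicate d (mat 1) \<in> (GL_tuples d :: (bit^'k^'k) list set)"
    by (simp add: GL_tuples_def invertible_one)
  have ne: "\<Omega> \<noteq> {}" using w0 s0 unfolding \<Omega>_def by blast
  define WQ where "WQ = {w\<in>words d (2*m). Q w}"
  define FX where "FX = (\<lambda>w. {s\<in>GL_tuples d. word_apply (s::(bit^'k^'k) list) w v1 = v1})"
  have sp: "sample_space d m = pmf_of_set \<Omega>" by (simp add: sample_space_def \<Omega>_def)
  have e1: "\<Omega> \<inter> {\<omega>. (case \<omega> of (w, s) \<Rightarrow> word_apply s w v1 = v1) \<and> (case \<omega> of (w, s) \<Rightarrow> Q w)} = Sigma WQ FX"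
    unfolding \<Omega>_def WQ_def FX_def by auto
  have e2: "\<Omega> \<inter> {\<omega>. case \<omega> of (w, s) \<Rightarrow> Q w} = WQ \<times> (GL_tuples d :: (bit^'k^'k) list set)"
    unfolding \<Omega>_def WQ_def by auto
  have finWQ: "finite WQ" unfolding WQ_def by simp
  define a where "a = card (Sigma WQ FX)"
  define b where "b = card WQ * card (GL_tuples d :: (bit^'k^'k) list set)"
  define n where "n = (2::nat) ^ CARD('k) - 1"
  have cpv: "cond_prob (measure_pmf (sample_space d m :: (literal list \<times> (bit^'k^'k) list) pmf))
      (\<lambda>(w, s). word_apply s w v1 = v1) (\<lambda>(w, s). Q w) = (real a / card \<Omega>) / (real b / card \<Omega>)"
    unfolding cond_prob_def sp a_def b_def
    by (simp add: measure_pmf_of_set[OF ne fin] e1 e2 card_cartesian_product)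
  have cO: "card \<Omega> > 0" using fin ne by (simp add: card_gt_0_iff)
  have ab: "real a / card \<Omega> / (real b / card \<Omega>) = real a / real b" using cO by simp
  have nNZ: "card (NZ::(bit^'k) set) = n" by (simp add: card_NZ n_def)
  have npos: "n > 0"
  proof -
    have "(2::nat) ^ CARD('k) \<ge> 2 ^ 1" by (rule power_increasing) simp_all
    then show ?thesis unfolding n_def by simp
  qed
  have na: "n * a \<le> 5 * b"
  proof -
    have "a = (\<Sum>w\<in>WQ. card (FX w))" unfolding a_def using finWQ by (simp add: card_SigmaI FX_def)
    then have "n * a = (\<Sum>w\<in>WQ. n * card (FX w))" by (simp add: sum_distrib_left)
    also have "\<dots> \<le> (\<Sum>w\<in>WQ. 5 * card (GL_tuples d :: (bit^'k^'k) list set))"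
    proof (rule sum_mono)
      fix w assume w: "w \<in> WQ"
      then have ww: "w \<in> words d (2*m)" "Q w" by (auto simp: WQ_def)
      then obtain j where "j < d" "letter_count w j = 3" using Q by blast
      then show "n * card (FX w) \<le> 5 * card (GL_tuples d :: (bit^'k^'k) list set)"
        using word_bound[OF ww(1) _ _ v1] unfolding FX_def nNZ[symmetric] by blast
    qed
    also have "\<dots> = 5 * b" unfolding b_def by simp
    finally show ?thesis .
  qed
  have "real a / real b \<le> 5 / real n"
  proof (cases "b = 0")
    case True then show ?thesis by simp
  next
    case False
    then have bp: "real b > 0" by simp
    have "real n * real a \<le> 5 * real b" using na by (metis of_nat_le_iff of_nat_mult of_nat_numeral)
    then show ?thesis using bp npos by (simp add: divide_le_eq le_divide_eq mult.commute)
  qed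
  then show ?thesis unfolding cpv ab n_def .
qed

theorem lemma4:
  fixes d m :: nat and v1 :: "bit ^'k"
  assumes "d \<ge> 1" and "v1 \<noteq> 0"
  defines "n \<equiv> 2 ^ CARD('k) - 1"
  shows "cond_prob (measure_pmf (sample_space d m :: (literal list \<times> (bit ^'k^'k) list) pmf))
           (\<lambda>(w, s). word_apply s w v1 = v1)
           (\<lambda>(w, s). \<exists>j<d. letter_count w j = 3) \<le> 5 / real n
       \<and> cond_prob (measure_pmf (sample_space d m :: (literal list \<times> (bit ^'k^'k) list) pmf))
           (\<lambda>(w, s). word_apply s w v1 = v1)
           (\<lambda>(w, s). (\<forall>j<d. letter_count w j \<noteq> 1 \<and> letter_count w j \<noteq> 2)
                     \<and> (\<exists>j<d. letter_count w j = 3)) \<le> 5 / real n"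
proof
  show "cond_prob (measure_pmf (sample_space d m :: (literal list \<times> (bit ^'k^'k) list) pmf))
           (\<lambda>(w, s). word_apply s w v1 = v1)
           (\<lambda>(w, s). \<exists>j<d. letter_count w j = 3) \<le> 5 / real n"
    unfolding n_def using top_bound[of v1 d m "\<lambda>w. \<exists>j<d. letter_count w j = 3"] assms(1,2) by blast
  show "cond_prob (measure_pmf (sample_space d m :: (literal list \<times> (bit ^'k^'k) list) pmf))
           (\<lambda>(w, s). word_apply s w v1 = v1)
           (\<lambda>(w, s). (\<forall>j<d. letter_count w j \<noteq> 1 \<and> letter_count w j \<noteq> 2)
                     \<and> (\<exists>j<d. letter_count w j = 3)) \<le> 5 / real n"
    unfolding n_def
    using top_bound[of v1 d m "\<lambda>w. (\<forall>j<d. letter_count w j \<noteq> 1 \<and> letter_count w j \<noteq> 2) \<and> (\<exists>j<d. letter_count w j = 3)"]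
      assms(1,2) by blast
qed


end
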